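(* Let $\lambda<1$ and let $X$ be a $d$-uniform $\lambda$-TD complex. Then for every $0\le k\le d$, every $\nu>0$, every $\nu$-Lipschitz function $f:X(k)\to\mathbb{R}$ and every $t>0$: \[\Pr[f-\mathbb{E}[f]\ge t]\le 2e^{-\frac{t}{\sqrt{c_\lambda\nu}}}\quad\text{and}\quad \Pr[f-\mathbb{E}[f]\le -t]\le 2e^{-\frac{t}{\sqrt{c_\lambda\nu}}},\] where $c_\lambda\le 1+e^{\frac{\lambda}{1-\lambda}}$; probabilities and expectations are over $\pi_k$.
   Context: A $d$-uniform simplicial complex $X$ is a finite downward-closed set family with maximal sets of size $d$, $X(j)$ its faces of size $j$, with a full-support distribution $\pi_d$ on $X(d)$ inducing $\pi_j$ on $X(j)$ (draw from $\pi_d$ and take a uniform $j$-subset). The link of a face $s$ is $X_s=\{t\setminus s:s\subseteq t\in X\}$ with induced distribution; its underlying graph has vertices $X_s(1)$ and weighted edges $X_s(2)$. A graph is a $\lambda$-one-sided expander if the second largest eigenvalue of its normalized adjacency operator is at most $\lambda$. $X$ is $\lambda$-TD (trickling-down) if it is connected (the graph underlying every link $X_s$, $|s|\le d-2$, including $X$ itself, is connected) and for every $s\in X(d-2)$ the graph underlying $X_s$ is a $\frac{\lambda}{d-1}$-one-sided expander. Lipschitz: order the vertices of every face arbitrarily. For $x=(x_1,\dots,x_k)\sim\pi_k$ let $Z=f(x)$, and for each $i$ let $Z'_{(i)}=f(x_1,\dots,z_i,\dots,x_k)$ where $z_i$ is sampled from the vertex distribution of the link of $x_{-i}=x\setminus\{x_i\}$.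 $f$ is $\nu$-Lipschitz if with probability $1$, $\sum_{i=1}^k (Z-Z'_{(i)})_+^2\le\nu$, where $(z)_+=\max\{z,0\}$. *)

theory Defs
  imports Complex_Main
begin

definition pure_complex :: "'a set set \<Rightarrow> nat \<Rightarrow> bool" where
  "pure_complex X d \<longleftrightarrow> finite X \<and> X \<noteq> {} \<and> (\<forall>s\<in>X. finite s)
     \<and> (\<forall>s\<in>X. \<forall>t. t \<subseteq> s \<longrightarrow> t \<in> X)
     \<and> (\<forall>s\<in>X. card s \<le> d)
     \<and> (\<forall>s\<in>X. \<exists>t\<in>X. s \<subseteq> t \<and> card t = d)"

definition faces :: "'a set set \<Rightarrow> nat \<Rightarrow> 'a set set" where
  "faces X j = {s\<in>X. card s = j}"

definition top_distribution :: "'a set set \<Rightarrow> nat \<Rightarrow> ('a set \<Rightarrow> real) \<Rightarrow> bool" where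
  "top_distribution X d w \<longleftrightarrow> (\<forall>t\<in>faces X d. w t > 0) \<and> (\<Sum>t\<in>faces X d. w t) = 1"

text \<open>pi_j: draw t from pi_d and take a uniform j-subset of t.\<close>
definition pi_k :: "'a set set \<Rightarrow> nat \<Rightarrow> ('a set \<Rightarrow> real) \<Rightarrow> nat \<Rightarrow> 'a set \<Rightarrow> real" where
  "pi_k X d w j s = (if card s = j
     then (\<Sum>t\<in>faces X d. if s \<subseteq> t then w t else 0) / real (d choose j) else 0)"

text \<open>Distribution pi^{X_s}_j on the j-faces u of the link X_s (u disjoint from s):
the link is (d - |s|)-uniform with top distribution proportional to pi_d(s \<union> u'),
and pi^{X_s}_j is induced by taking a uniform j-subset.\<close>
definition link_pi :: "'a set set \<Rightarrow> nat \<Rightarrow> ('a set \<Rightarrow> real) \<Rightarrow> 'a set \<Rightarrow> nat \<Rightarrow> 'a set \<Rightarrow> real" where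
  "link_pi X d w s j u = (if u \<inter> s = {} \<and> card u = j
     then (\<Sum>t\<in>faces X d. if s \<union> u \<subseteq> t then w t else 0)
          / ((\<Sum>t\<in>faces X d. if s \<subseteq> t then w t else 0) * real ((d - card s) choose j))
     else 0)"

definition link_vertices :: "'a set set \<Rightarrow> 'a set \<Rightarrow> 'a set" where
  "link_vertices X s = {u. u \<notin> s \<and> insert u s \<in> X}"

definition link_edge :: "'a set set \<Rightarrow> 'a set \<Rightarrow> 'a \<Rightarrow> 'a \<Rightarrow> bool" where
  "link_edge X s u v \<longleftrightarrow> u \<noteq> v \<and> u \<notin> s \<and> v \<notin> s \<and> insert u (insert v s) \<in> X"

definition link_weight :: "'a set set \<Rightarrow> nat \<Rightarrow> ('a set \<Rightarrow> real) \<Rightarrow> 'a set \<Rightarrow> 'a \<Rightarrow> 'a \<Rightarrow> real" where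
  "link_weight X d w s u v = (if u \<noteq> v then link_pi X d w s 2 {u, v} else 0)"

definition graph_connected :: "'a set \<Rightarrow> ('a \<Rightarrow> 'a \<Rightarrow> bool) \<Rightarrow> bool" where
  "graph_connected V E \<longleftrightarrow> (\<forall>u\<in>V. \<forall>v\<in>V. (\<lambda>a b. a \<in> V \<and> b \<in> V \<and> E a b)\<^sup>*\<^sup>* u v)"

definition norm_adj :: "'a set \<Rightarrow> ('a \<Rightarrow> 'a \<Rightarrow> real) \<Rightarrow> 'a \<Rightarrow> 'a \<Rightarrow> real" where
  "norm_adj V W u v = W u v / (\<Sum>v'\<in>V. W u v')"

definition is_eigenpair :: "'a set \<Rightarrow> ('a \<Rightarrow> 'a \<Rightarrow> real) \<Rightarrow> real \<Rightarrow> ('a \<Rightarrow> real) \<Rightarrow> bool" where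
  "is_eigenpair V A \<mu> g \<longleftrightarrow> (\<exists>v\<in>V. g v \<noteq> 0) \<and> (\<forall>u\<in>V. (\<Sum>v\<in>V. A u v * g v) = \<mu> * g u)"

text \<open>lambda-one-sided expander: the second largest eigenvalue (with multiplicity) of the
normalized adjacency operator is at most lambda, i.e. the eigenvectors with eigenvalue
greater than lambda span a space of dimension at most 1.  (The operator is self-adjoint
w.r.t. the stationary measure, hence diagonalizable with real eigenvalues/eigenvectors.)\<close>
definition one_sided_expander :: "'a set \<Rightarrow> ('a \<Rightarrow> 'a \<Rightarrow> real) \<Rightarrow> real \<Rightarrow> bool" where
  "one_sided_expander V W lam \<longleftrightarrow>
     (\<forall>\<mu>1 \<mu>2 g1 g2. is_eigenpair V (norm_adj V W) \<mu>1 g1 \<and> is_eigenpair V (norm_adj V W) \<mu>2 g2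
        \<and> \<mu>1 > lam \<and> \<mu>2 > lam
        \<longrightarrow> (\<exists>a b. (a \<noteq> 0 \<or> b \<noteq> 0) \<and> (\<forall>v\<in>V. a * g1 v + b * g2 v = 0)))"

definition is_TD :: "'a set set \<Rightarrow> nat \<Rightarrow> ('a set \<Rightarrow> real) \<Rightarrow> real \<Rightarrow> bool" where
  "is_TD X d w lam \<longleftrightarrow>
     (\<forall>s\<in>X. card s + 2 \<le> d \<longrightarrow> graph_connected (link_vertices X s) (link_edge X s))
   \<and> (\<forall>s\<in>X. card s + 2 = d \<longrightarrow>
        one_sided_expander (link_vertices X s) (link_weight X d w s) (lam / real (d - 1)))"

text \<open>nu-Lipschitz: almost surely over x ~ pi_k and z_i ~ vertex distribution of the link of
x minus x_i, the sum over i of (f(x) - f(x with x_i replaced by z_i))_+^2 is at most nu.\<close>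
definition lipschitz :: "'a set set \<Rightarrow> nat \<Rightarrow> ('a set \<Rightarrow> real) \<Rightarrow> nat \<Rightarrow> ('a set \<Rightarrow> real) \<Rightarrow> real \<Rightarrow> bool" where
  "lipschitz X d w k f \<nu> \<longleftrightarrow>
     (\<forall>s\<in>faces X k. pi_k X d w k s > 0 \<longrightarrow>
        (\<forall>z :: 'a \<Rightarrow> 'a. (\<forall>v\<in>s. link_pi X d w (s - {v}) 1 {z v} > 0) \<longrightarrow>
          (\<Sum>v\<in>s. (max (f s - f (insert (z v) (s - {v}))) 0)\<^sup>2) \<le> \<nu>))"

definition expect_k :: "'a set set \<Rightarrow> nat \<Rightarrow> ('a set \<Rightarrow> real) \<Rightarrow> nat \<Rightarrow> ('a set \<Rightarrow> real) \<Rightarrow> real" where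
  "expect_k X d w k f = (\<Sum>s\<in>faces X k. pi_k X d w k s * f s)"

definition prob_k :: "'a set set \<Rightarrow> nat \<Rightarrow> ('a set \<Rightarrow> real) \<Rightarrow> nat \<Rightarrow> ('a set \<Rightarrow> bool) \<Rightarrow> real" where
  "prob_k X d w k P = (\<Sum>s\<in>{s\<in>faces X k. P s}. pi_k X d w k s)"

end

theory Submission
  imports Defs "HOL-Analysis.Analysis"
begin


locale cplx =
  fixes X :: "'a set set" and d :: nat and w :: "'a set \<Rightarrow> real"
  assumes pure: "pure_complex X d" and td: "top_distribution X d w"
begin

definition TF where "TF = faces X d"
definition W where "W s = (\<Sum>t\<in>TF. if s \<subseteq> t then w t else 0)"
definition Vx where "Vx = \<Union>X"

lemma finX: "finite X" using pure unfolding pure_complex_def by auto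
lemma fin_face: "s \<in> X \<Longrightarrow> finite s" using pure unfolding pure_complex_def by auto
lemma down: "s \<in> X \<Longrightarrow> t \<subseteq> s \<Longrightarrow> t \<in> X" using pure unfolding pure_complex_def by auto
lemma card_le: "s \<in> X \<Longrightarrow> card s \<le> d" using pure unfolding pure_complex_def by auto
lemma ext_top: "s \<in> X \<Longrightarrow> \<exists>t\<in>X. s \<subseteq> t \<and> card t = d" using pure unfolding pure_complex_def by auto
lemma X_ne: "X \<noteq> {}" using pure unfolding pure_complex_def by auto
lemma empty_in: "{} \<in> X" using X_ne down by blast
lemma finite_Vx: "finite Vx" unfolding Vx_def using finX fin_face by auto
lemma face_sub_Vx: "s \<in> X \<Longrightarrow> s \<subseteq> Vx" unfolding Vx_def by auto
lemma finite_TF: "finite TF" unfolding TF_def faces_def using finX by auto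
lemma finite_faces: "finite (faces X j)" unfolding faces_def using finX by auto
lemma w_pos: "t \<in> TF \<Longrightarrow> w t > 0" using td unfolding top_distribution_def TF_def by auto
lemma w_sum: "(\<Sum>t\<in>TF. w t) = 1" using td unfolding top_distribution_def TF_def by auto

lemma W_nonneg: "W s \<ge> 0"
  unfolding W_def by (rule sum_nonneg) (auto simp: less_imp_le w_pos)

lemma W_zero: "s \<notin> X \<Longrightarrow> W s = 0"
  unfolding W_def TF_def faces_def
  by (rule sum.neutral) (auto dest: down)

lemma W_pos: assumes "s \<in> X" shows "W s > 0"
proof -
  obtain t where t: "t \<in> X" "s \<subseteq> t" "card t = d" using ext_top[OF assms] by blast
  have tT: "t \<in> TF" using t unfolding TF_def faces_def by auto
  have "0 < (if s \<subseteq> t then w t else 0)" using t w_pos[OF tT] by auto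
  also have "\<dots> \<le> W s" unfolding W_def
    by (rule member_le_sum) (auto simp: tT finite_TF less_imp_le w_pos)
  finally show ?thesis .
qed

lemma W_pos_iff: "W s > 0 \<longleftrightarrow> s \<in> X"
  using W_pos W_zero by fastforce

lemma W_empty: "W {} = 1" unfolding W_def using w_sum by simp

lemma faces_0: "faces X 0 = {{}}"
  unfolding faces_def using empty_in fin_face by auto

lemma W_ext: "(\<Sum>z\<in>Vx - y. W (insert z y)) = real (d - card y) * W y"
proof -
  have "(\<Sum>z\<in>Vx - y. W (insert z y)) = (\<Sum>z\<in>Vx - y. \<Sum>t\<in>TF. if insert z y \<subseteq> t then w t else 0)"
    unfolding W_def by simp
  also have "\<dots> = (\<Sum>t\<in>TF. \<Sum>z\<in>Vx - y. if insert z y \<subseteq> t then w t else 0)"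
    by (rule sum.swap)
  also have "\<dots> = (\<Sum>t\<in>TF. if y \<subseteq> t then real (d - card y) * w t else 0)"
  proof (rule sum.cong[OF refl])
    fix t assume tT: "t \<in> TF"
    then have tX: "t \<in> X" and ct: "card t = d" unfolding TF_def faces_def by auto
    have ft: "finite t" using fin_face[OF tX] .
    show "(\<Sum>z\<in>Vx - y. if insert z y \<subseteq> t then w t else 0) = (if y \<subseteq> t then real (d - card y) * w t else 0)"
    proof (cases "y \<subseteq> t")
      case True
      have "(\<Sum>z\<in>Vx - y. if insert z y \<subseteq> t then w t else 0) = (\<Sum>z\<in>(Vx - y) \<inter> t. w t)"
        using True by (subst sum.inter_restrict[OF]) (auto simp: finite_Vx intro!: sum.cong)
      also have "(Vx - y) \<inter> t = t - y" using face_sub_Vx[OF tX] by auto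
      also have "(\<Sum>z\<in>t - y. w t) = real (card (t - y)) * w t" by simp
      also have "card (t - y) = d - card y" using True ft ct by (simp add: card_Diff_subset finite_subset)
      finally show ?thesis using True by simp
    next
      case False
      then show ?thesis by (auto intro!: sum.neutral)
    qed
  qed
  also have "\<dots> = real (d - card y) * W y"
    unfolding W_def by (simp add: sum_distrib_left if_distrib cong: if_cong)
  finally show ?thesis .
qed

lemma RI:
  "(\<Sum>x\<in>faces X (Suc j). \<Sum>v\<in>x. G (x - {v}) v) =
   (\<Sum>y\<in>faces X j. \<Sum>z\<in>Vx - y. if insert z y \<in> X then G y z else 0)"
proof -
  have L: "(\<Sum>x\<in>faces X (Suc j). \<Sum>v\<in>x. G (x - {v}) v) = (\<Sum>(x,v)\<in>Sigma (faces X (Suc j)) (\<lambda>x. x). G (x - {v}) v)"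
    by (rule sum.Sigma) (auto simp: finite_faces fin_face faces_def finX)
  have R: "(\<Sum>y\<in>faces X j. \<Sum>z\<in>Vx - y. if insert z y \<in> X then G y z else 0) =
        (\<Sum>y\<in>faces X j. \<Sum>z\<in>{z\<in>Vx - y. insert z y \<in> X}. G y z)"
    by (rule sum.cong[OF refl]) (simp add: sum.inter_filter[symmetric] finite_Vx)
  also have "\<dots> = (\<Sum>(y,z)\<in>Sigma (faces X j) (\<lambda>y. {z\<in>Vx - y. insert z y \<in> X}). G y z)"
    by (rule sum.Sigma) (auto simp: finite_faces finite_Vx)
  also have "\<dots> = (\<Sum>(x,v)\<in>Sigma (faces X (Suc j)) (\<lambda>x. x). G (x - {v}) v)"
  proof (rule sum.reindex_bij_witness[where j="\<lambda>(y,z). (insert z y, z)" and i="\<lambda>(x,v). (x - {v}, v)"])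
    fix b assume "b \<in> Sigma (faces X j) (\<lambda>y. {z \<in> Vx - y. insert z y \<in> X})"
    then obtain y z where b: "b = (y,z)" "y \<in> X" "card y = j" "z \<in> Vx" "z \<notin> y" "insert z y \<in> X"
      unfolding faces_def by auto
    have fy: "finite y" using fin_face b by auto
    show "(case (case b of (y, z) \<Rightarrow> (insert z y, z)) of (x, v) \<Rightarrow> (x - {v}, v)) = b"
      using b by auto
    show "(case b of (y, z) \<Rightarrow> (insert z y, z)) \<in> Sigma (faces X (Suc j)) (\<lambda>x. x)"
      using b fy by (auto simp: faces_def)
    show "(case (case b of (y, z) \<Rightarrow> (insert z y, z)) of (x, v) \<Rightarrow> G (x - {v}) v) = (case b of (y, z) \<Rightarrow> G y z)"
      using b by auto
  next
    fix a assume "a \<in> Sigma (faces X (Suc j)) (\<lambda>x. x)"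
    then obtain x v where a: "a = (x,v)" "x \<in> X" "card x = Suc j" "v \<in> x" unfolding faces_def by auto
    have fx: "finite x" using fin_face a by auto
    show "(case (case a of (x, v) \<Rightarrow> (x - {v}, v)) of (y, z) \<Rightarrow> (insert z y, z)) = a"
      using a by auto
    show "(case a of (x, v) \<Rightarrow> (x - {v}, v)) \<in> Sigma (faces X j) (\<lambda>y. {z \<in> Vx - y. insert z y \<in> X})"
      using a fx face_sub_Vx[of x] by (auto simp: faces_def intro: down)
  qed
  finally show ?thesis using L by simp
qed

lemma RIW2:
  "(\<Sum>y\<in>faces X j. \<Sum>z\<in>Vx - y. W (insert z y) * G y z) =
   (\<Sum>x\<in>faces X (Suc j). W x * (\<Sum>v\<in>x. G (x - {v}) v))"
proof -
  have "(\<Sum>x\<in>faces X (Suc j). W x * (\<Sum>v\<in>x. G (x - {v}) v)) =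
        (\<Sum>x\<in>faces X (Suc j). \<Sum>v\<in>x. W (insert v (x - {v})) * G (x - {v}) v)"
    by (rule sum.cong[OF refl]) (auto simp: sum_distrib_left insert_absorb intro!: sum.cong)
  also have "\<dots> = (\<Sum>y\<in>faces X j. \<Sum>z\<in>Vx - y. if insert z y \<in> X then W (insert z y) * G y z else 0)"
    by (rule RI)
  also have "\<dots> = (\<Sum>y\<in>faces X j. \<Sum>z\<in>Vx - y. W (insert z y) * G y z)"
    by (auto intro!: sum.cong simp: W_zero)
  finally show ?thesis by simp
qed

lemma RIW:
  "(\<Sum>y\<in>faces X j. \<Sum>z\<in>Vx - y. W (insert z y) * H (insert z y)) =
   real (Suc j) * (\<Sum>x\<in>faces X (Suc j). W x * H x)"
proof -
  have "(\<Sum>y\<in>faces X j. \<Sum>z\<in>Vx - y. W (insert z y) * H (insert z y)) =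
     (\<Sum>x\<in>faces X (Suc j). W x * (\<Sum>v\<in>x. H (insert v (x - {v}))))"
    by (rule RIW2)
  also have "\<dots> = (\<Sum>x\<in>faces X (Suc j). W x * (real (Suc j) * H x))"
    by (rule sum.cong[OF refl]) (auto simp: faces_def insert_absorb)
  finally show ?thesis by (simp add: sum_distrib_left mult.commute mult.left_commute)
qed

lemma binom_id: "real (d choose j) * real (d - j) = real (d choose Suc j) * real (Suc j)"
proof -
  have "(d choose Suc j) * Suc j = (d choose j) * (d - j)"
    by (metis binomial_absorb_comp binomial_absorption mult.commute diff_Suc_1 binomial_symmetric)
  then show ?thesis by (metis of_nat_mult)
qed

lemma W_level_sum: "j \<le> d \<Longrightarrow> (\<Sum>x\<in>faces X j. W x) = real (d choose j)"
proof (induction j)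
  case 0 then show ?case by (simp add: faces_0 W_empty)
next
  case (Suc j)
  have "real (Suc j) * (\<Sum>x\<in>faces X (Suc j). W x * 1) = (\<Sum>y\<in>faces X j. \<Sum>z\<in>Vx - y. W (insert z y) * 1)"
    by (rule RIW[symmetric])
  also have "\<dots> = (\<Sum>y\<in>faces X j. real (d - j) * W y)"
    by (rule sum.cong[OF refl]) (simp add: W_ext faces_def)
  also have "\<dots> = real (d - j) * real (d choose j)" using Suc by (simp add: sum_distrib_left[symmetric])
  also have "\<dots> = real (d choose Suc j) * real (Suc j)" using binom_id by (simp add: mult.commute)
  finally show ?case by (simp add: mult.commute)
qed

end


lemma wCS:
  fixes a b c :: "'b \<Rightarrow> real"
  assumes "\<And>i. i \<in> I \<Longrightarrow> a i \<ge> 0"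
  shows "(\<Sum>i\<in>I. a i * b i * c i)^2 \<le> (\<Sum>i\<in>I. a i * (b i)^2) * (\<Sum>i\<in>I. a i * (c i)^2)"
proof -
  have "(\<Sum>i\<in>I. a i * b i * c i) = (\<Sum>i\<in>I. (sqrt (a i) * b i) * (sqrt (a i) * c i))"
    using assms by (intro sum.cong) (auto simp: algebra_simps real_sqrt_mult[symmetric])
  moreover have "(\<Sum>i\<in>I. a i * (b i)^2) = (\<Sum>i\<in>I. (sqrt (a i) * b i)^2)"
    using assms by (intro sum.cong) (auto simp: power_mult_distrib)
  moreover have "(\<Sum>i\<in>I. a i * (c i)^2) = (\<Sum>i\<in>I. (sqrt (a i) * c i)^2)"
    using assms by (intro sum.cong) (auto simp: power_mult_distrib)
  ultimately show ?thesis using Cauchy_Schwarz_ineq_sum[where a="\<lambda>i. sqrt (a i) * b i" and I=I and b="\<lambda>i. sqrt (a i) * c i"] by simp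
qed

lemma sq_sum_split:
  fixes a :: "'b \<Rightarrow> real"
  assumes "finite x"
  shows "(\<Sum>v\<in>x. a v)^2 = (\<Sum>v\<in>x. (a v)^2) + (\<Sum>v\<in>x. \<Sum>v'\<in>x - {v}. a v * a v')"
proof -
  have "(\<Sum>v\<in>x. a v)^2 = (\<Sum>v\<in>x. \<Sum>v'\<in>x. a v * a v')"
    by (simp add: power2_eq_square sum_product)
  also have "\<dots> = (\<Sum>v\<in>x. (a v)^2 + (\<Sum>v'\<in>x - {v}. a v * a v'))"
    using assms by (intro sum.cong refl) (simp add: sum.remove power2_eq_square)
  finally show ?thesis by (simp add: sum.distrib)
qed

context cplx
begin

definition Sq where "Sq j h = (\<Sum>y\<in>faces X j. W y * (h y)^2)"
definition Tq where "Tq i h = (\<Sum>s\<in>faces X i. (\<Sum>u\<in>Vx - s. W (insert u s) * h (insert u s))^2 / W s)"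
definition Uq where "Uq j h = (\<Sum>x\<in>faces X (Suc j). W x * (\<Sum>v\<in>x. h (x - {v}))^2)"
definition mean0 where "mean0 j h \<longleftrightarrow> (\<Sum>y\<in>faces X j. W y * h y) = 0"
definition LE where "LE s \<gamma> \<longleftrightarrow> (\<forall>g. (\<Sum>u\<in>Vx - s. \<Sum>v\<in>Vx - s - {u}. W (insert u (insert v s)) * g u * g v)
   \<le> (real (d - card s) - 1) * (\<gamma> * (\<Sum>u\<in>Vx - s. W (insert u s) * (g u)^2)
       + (1 - \<gamma>) * (\<Sum>u\<in>Vx - s. W (insert u s) * g u)^2 / (real (d - card s) * W s)))"

lemma Sq_nonneg: "Sq j h \<ge> 0"
  unfolding Sq_def by (intro sum_nonneg mult_nonneg_nonneg W_nonneg) auto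

lemma term2:
  "(\<Sum>x\<in>faces X (Suc (Suc i)). W x * (\<Sum>v\<in>x. \<Sum>v'\<in>x - {v}. h (x - {v}) * h (x - {v'}))) =
   (\<Sum>s\<in>faces X i. \<Sum>u\<in>Vx - s. \<Sum>u'\<in>Vx - s - {u}. W (insert u (insert u' s)) * h (insert u s) * h (insert u' s))"
proof -
  define G where "G y z = (\<Sum>v'\<in>y. h y * h (insert z (y - {v'})))" for y z
  have "(\<Sum>x\<in>faces X (Suc (Suc i)). W x * (\<Sum>v\<in>x. \<Sum>v'\<in>x - {v}. h (x - {v}) * h (x - {v'})))
      = (\<Sum>x\<in>faces X (Suc (Suc i)). W x * (\<Sum>v\<in>x. G (x - {v}) v))"
  proof (rule sum.cong[OF refl])
    fix x assume "x \<in> faces X (Suc (Suc i))"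
    have "\<And>v v'. v \<in> x \<Longrightarrow> v' \<in> x - {v} \<Longrightarrow> insert v (x - {v} - {v'}) = x - {v'}" by auto
    then show "W x * (\<Sum>v\<in>x. \<Sum>v'\<in>x - {v}. h (x - {v}) * h (x - {v'})) = W x * (\<Sum>v\<in>x. G (x - {v}) v)"
      unfolding G_def by (auto intro!: sum.cong)
  qed
  also have "\<dots> = (\<Sum>y\<in>faces X (Suc i). \<Sum>z\<in>Vx - y. W (insert z y) * G y z)"
    by (rule RIW2[symmetric])
  also have "\<dots> = (\<Sum>y\<in>faces X (Suc i). \<Sum>v'\<in>y. \<Sum>z\<in>Vx - y. W (insert z y) * (h y * h (insert z (y - {v'}))))"
  proof (rule sum.cong[OF refl])
    fix y
    show "(\<Sum>z\<in>Vx - y. W (insert z y) * G y z) = (\<Sum>v'\<in>y. \<Sum>z\<in>Vx - y. W (insert z y) * (h y * h (insert z (y - {v'}))))"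
      unfolding G_def sum_distrib_left by (rule sum.swap)
  qed
  also have "\<dots> = (\<Sum>y\<in>faces X (Suc i). \<Sum>v'\<in>y. (\<lambda>s u. \<Sum>z\<in>Vx - insert u s. W (insert z (insert u s)) * (h (insert u s) * h (insert z s))) (y - {v'}) v')"
  proof (rule sum.cong[OF refl], rule sum.cong[OF refl])
    fix y :: "'a set" and v' assume "v' \<in> y"
    then have e: "insert v' (y - {v'}) = y" by auto
    show "(\<Sum>z\<in>Vx - y. W (insert z y) * (h y * h (insert z (y - {v'})))) =
      (\<lambda>s u. \<Sum>z\<in>Vx - insert u s. W (insert z (insert u s)) * (h (insert u s) * h (insert z s))) (y - {v'}) v'"
      by (simp only: e)
  qed
  also have "\<dots> = (\<Sum>s\<in>faces X i. \<Sum>u\<in>Vx - s. if insert u s \<in> X then (\<Sum>z\<in>Vx - insert u s. W (insert z (insert u s)) * (h (insert u s) * h (insert z s))) else 0)"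
    by (rule RI[where G="\<lambda>s u. \<Sum>z\<in>Vx - insert u s. W (insert z (insert u s)) * (h (insert u s) * h (insert z s))"])
  also have "\<dots> = (\<Sum>s\<in>faces X i. \<Sum>u\<in>Vx - s. \<Sum>u'\<in>Vx - s - {u}. W (insert u (insert u' s)) * h (insert u s) * h (insert u' s))"
  proof (intro sum.cong refl)
    fix s u assume "s \<in> faces X i" "u \<in> Vx - s"
    show "(if insert u s \<in> X then (\<Sum>z\<in>Vx - insert u s. W (insert z (insert u s)) * (h (insert u s) * h (insert z s))) else 0) =
          (\<Sum>u'\<in>Vx - s - {u}. W (insert u (insert u' s)) * h (insert u s) * h (insert u' s))"
    proof (cases "insert u s \<in> X")
      case True
      have e: "Vx - insert u s = Vx - s - {u}" by auto
      have eqz: "\<And>z. W (insert z (insert u s)) * (h (insert u s) * h (insert z s)) = W (insert u (insert z s)) * h (insert u s) * h (insert z s)"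
        by (simp add: insert_commute mult.assoc)
      show ?thesis using True by (simp only: e if_True) (rule sum.cong[OF refl eqz])
    next
      case False
      have "\<And>u'. insert u (insert u' s) \<notin> X" using False down by (metis insert_commute subset_insertI)
      then have "\<And>u'. W (insert u (insert u' s)) = 0" by (simp add: W_zero)
      then show ?thesis using False by simp
    qed
  qed
  finally show ?thesis .
qed

lemma garland:
  assumes i2: "Suc (Suc i) \<le> d" and g1: "\<gamma> \<le> 1" and LEs: "\<forall>s\<in>faces X i. LE s \<gamma>"
  shows "Uq (Suc i) h \<le> real (d - Suc i) * ((1 + \<gamma> * real (Suc i)) * Sq (Suc i) h + (1 - \<gamma>) * Tq i h / real (d - i))"
proof -
  have split: "Uq (Suc i) h = (\<Sum>x\<in>faces X (Suc (Suc i)). W x * (\<Sum>v\<in>x. (h (x - {v}))^2))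
       + (\<Sum>x\<in>faces X (Suc (Suc i)). W x * (\<Sum>v\<in>x. \<Sum>v'\<in>x - {v}. h (x - {v}) * h (x - {v'})))"
    unfolding Uq_def
    by (subst sum.distrib[symmetric], rule sum.cong[OF refl])
       (auto simp: faces_def fin_face sq_sum_split distrib_left)
  have t1: "(\<Sum>x\<in>faces X (Suc (Suc i)). W x * (\<Sum>v\<in>x. (h (x - {v}))^2)) = real (d - Suc i) * Sq (Suc i) h"
  proof -
    have "(\<Sum>x\<in>faces X (Suc (Suc i)). W x * (\<Sum>v\<in>x. (h (x - {v}))^2))
        = (\<Sum>y\<in>faces X (Suc i). \<Sum>z\<in>Vx - y. W (insert z y) * (h y)^2)"
      by (rule RIW2[symmetric])
    also have "\<dots> = (\<Sum>y\<in>faces X (Suc i). real (d - Suc i) * W y * (h y)^2)"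
      by (intro sum.cong refl) (auto simp: sum_distrib_right[symmetric] W_ext faces_def)
    finally show ?thesis unfolding Sq_def by (simp add: sum_distrib_left mult.assoc)
  qed
  have t2: "(\<Sum>x\<in>faces X (Suc (Suc i)). W x * (\<Sum>v\<in>x. \<Sum>v'\<in>x - {v}. h (x - {v}) * h (x - {v'})))
      \<le> (\<Sum>s\<in>faces X i. real (d - Suc i) * (\<gamma> * (\<Sum>u\<in>Vx - s. W (insert u s) * (h (insert u s))^2)
           + (1 - \<gamma>) * (\<Sum>u\<in>Vx - s. W (insert u s) * h (insert u s))^2 / (real (d - i) * W s)))"
    unfolding term2
  proof (rule sum_mono)
    fix s assume s: "s \<in> faces X i"
    have cs: "card s = i" using s unfolding faces_def by auto
    have e: "real (d - i) - 1 = real (d - Suc i)" using i2 by (simp add: of_nat_diff)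
    have "LE s \<gamma>" using LEs s by auto
    then have "(\<Sum>u\<in>Vx - s. \<Sum>v\<in>Vx - s - {u}. W (insert u (insert v s)) * h (insert u s) * h (insert v s))
       \<le> (real (d - card s) - 1) * (\<gamma> * (\<Sum>u\<in>Vx - s. W (insert u s) * (h (insert u s))^2)
       + (1 - \<gamma>) * (\<Sum>u\<in>Vx - s. W (insert u s) * h (insert u s))^2 / (real (d - card s) * W s))"
      unfolding LE_def by (rule allE[where x="\<lambda>u. h (insert u s)"]) 
    note this[unfolded cs e]
    then show "(\<Sum>u\<in>Vx - s. \<Sum>u'\<in>Vx - s - {u}. W (insert u (insert u' s)) * h (insert u s) * h (insert u' s))
       \<le> real (d - Suc i) * (\<gamma> * (\<Sum>u\<in>Vx - s. W (insert u s) * (h (insert u s))^2)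
           + (1 - \<gamma>) * (\<Sum>u\<in>Vx - s. W (insert u s) * h (insert u s))^2 / (real (d - i) * W s))"
      by simp
  qed
  have r1: "(\<Sum>s\<in>faces X i. \<Sum>u\<in>Vx - s. W (insert u s) * (h (insert u s))^2) = real (Suc i) * Sq (Suc i) h"
    unfolding Sq_def by (rule RIW)
  have r2: "(\<Sum>s\<in>faces X i. (\<Sum>u\<in>Vx - s. W (insert u s) * h (insert u s))^2 / (real (d - i) * W s)) = Tq i h / real (d - i)"
    unfolding Tq_def by (simp add: sum_divide_distrib mult.commute)
  have "(\<Sum>s\<in>faces X i. real (d - Suc i) * (\<gamma> * (\<Sum>u\<in>Vx - s. W (insert u s) * (h (insert u s))^2)
           + (1 - \<gamma>) * (\<Sum>u\<in>Vx - s. W (insert u s) * h (insert u s))^2 / (real (d - i) * W s)))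
     = real (d - Suc i) * (\<gamma> * (\<Sum>s\<in>faces X i. \<Sum>u\<in>Vx - s. W (insert u s) * (h (insert u s))^2)
         + (1 - \<gamma>) * (\<Sum>s\<in>faces X i. (\<Sum>u\<in>Vx - s. W (insert u s) * h (insert u s))^2 / (real (d - i) * W s)))"
    by (simp add: distrib_left sum.distrib sum_distrib_left mult.assoc)
  also have "\<dots> = real (d - Suc i) * (\<gamma> * real (Suc i) * Sq (Suc i) h + (1 - \<gamma>) * Tq i h / real (d - i))"
    using r1 r2 by simp
  finally have t2': "(\<Sum>x\<in>faces X (Suc (Suc i)). W x * (\<Sum>v\<in>x. \<Sum>v'\<in>x - {v}. h (x - {v}) * h (x - {v'})))
      \<le> real (d - Suc i) * (\<gamma> * real (Suc i) * Sq (Suc i) h + (1 - \<gamma>) * Tq i h / real (d - i))"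
    using t2 by linarith
  have eq: "real (d - Suc i) * ((1 + \<gamma> * real (Suc i)) * Sq (Suc i) h + (1 - \<gamma>) * Tq i h / real (d - i))
    = real (d - Suc i) * Sq (Suc i) h + real (d - Suc i) * (\<gamma> * real (Suc i) * Sq (Suc i) h + (1 - \<gamma>) * Tq i h / real (d - i))"
    by (simp add: algebra_simps)
  show ?thesis using split t1 t2' eq by linarith
qed

end


context cplx
begin

lemma Tq_0_mean0: assumes "mean0 (Suc 0) h" shows "Tq 0 h = 0"
proof -
  have "(\<Sum>y\<in>faces X 0. \<Sum>z\<in>Vx - y. W (insert z y) * h (insert z y)) = real (Suc 0) * (\<Sum>x\<in>faces X (Suc 0). W x * h x)"
    by (rule RIW)
  also have "\<dots> = 0" using assms unfolding mean0_def by simp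
  finally have "(\<Sum>z\<in>Vx - {}. W (insert z {}) * h (insert z {})) = 0" by (simp add: faces_0)
  then show ?thesis unfolding Tq_def by (simp add: faces_0)
qed

lemma l2g:
  assumes kd: "kk \<le> d"
    and Q1: "Q (Suc 0) \<le> 1"
    and Qb: "\<And>j. Q j \<le> real j"
    and step: "\<And>i. Suc (Suc i) \<le> kk \<Longrightarrow> \<exists>\<gamma>. \<gamma> \<le> 1 \<and> (\<forall>s\<in>faces X i. LE s \<gamma>) \<and> Q (Suc (Suc i)) \<le> (1 - \<gamma>) * Q (Suc i)"
  shows "Suc i \<le> kk \<Longrightarrow> mean0 (Suc i) h \<Longrightarrow> Tq i h \<le> real (d - i) * (real (Suc i) - Q (Suc i)) * Sq (Suc i) h"
proof (induction i arbitrary: h)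
  case 0
  have "Tq 0 h = 0" using Tq_0_mean0 0 by simp
  moreover have "0 \<le> real (d - 0) * (real (Suc 0) - Q (Suc 0)) * Sq (Suc 0) h"
    using Q1 Sq_nonneg by (intro mult_nonneg_nonneg) auto
  ultimately show ?case by simp
next
  case (Suc i)
  note g0 = Suc.prems(2)
  have i2: "Suc (Suc i) \<le> kk" using Suc.prems(1) by simp
  obtain \<gamma> where g1: "\<gamma> \<le> 1" and LEs: "\<forall>s\<in>faces X i. LE s \<gamma>" and Qs: "Q (Suc (Suc i)) \<le> (1 - \<gamma>) * Q (Suc i)"
    using step[OF i2] by blast
  define g where "g = h"
  define Dg where "Dg y = (\<Sum>z\<in>Vx - y. W (insert z y) * g (insert z y)) / W y" for y
  define Y where "Y = Sq (Suc i) Dg"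
  have Wpos: "y \<in> faces X j \<Longrightarrow> W y > 0" for y j using W_pos unfolding faces_def by auto
  have F1: "Tq (Suc i) g = Y"
    unfolding Tq_def Y_def Sq_def Dg_def
    by (rule sum.cong[OF refl]) (auto dest: Wpos simp: power2_eq_square)
  have F2: "Y = (\<Sum>x\<in>faces X (Suc (Suc i)). W x * g x * (\<Sum>v\<in>x. Dg (x - {v})))"
  proof -
    have "Y = (\<Sum>y\<in>faces X (Suc i). Dg y * (\<Sum>z\<in>Vx - y. W (insert z y) * g (insert z y)))"
      unfolding Y_def Sq_def
      by (rule sum.cong[OF refl]) (auto dest: Wpos simp: power2_eq_square Dg_def)
    also have "\<dots> = (\<Sum>y\<in>faces X (Suc i). \<Sum>z\<in>Vx - y. W (insert z y) * (Dg y * g (insert z y)))"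
      by (simp add: sum_distrib_left mult.left_commute)
    also have "\<dots> = (\<Sum>x\<in>faces X (Suc (Suc i)). W x * (\<Sum>v\<in>x. Dg (x - {v}) * g (insert v (x - {v}))))"
      by (rule RIW2)
    also have "\<dots> = (\<Sum>x\<in>faces X (Suc (Suc i)). W x * g x * (\<Sum>v\<in>x. Dg (x - {v})))"
    proof (rule sum.cong[OF refl])
      fix x :: "'a set"
      have "(\<Sum>v\<in>x. Dg (x - {v}) * g (insert v (x - {v}))) = (\<Sum>v\<in>x. Dg (x - {v}) * g x)"
        by (rule sum.cong[OF refl]) (simp add: insert_absorb)
      then show "W x * (\<Sum>v\<in>x. Dg (x - {v}) * g (insert v (x - {v}))) = W x * g x * (\<Sum>v\<in>x. Dg (x - {v}))"
        by (simp add: sum_distrib_left sum_distrib_right mult.commute mult.left_commute)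
    qed
    finally show ?thesis .
  qed
  have F3: "Y^2 \<le> Sq (Suc (Suc i)) g * Uq (Suc i) Dg"
    unfolding F2 Sq_def Uq_def
    by (rule wCS) (rule W_nonneg)
  have F4: "mean0 (Suc i) Dg"
  proof -
    have "(\<Sum>y\<in>faces X (Suc i). W y * Dg y) = (\<Sum>y\<in>faces X (Suc i). \<Sum>z\<in>Vx - y. W (insert z y) * g (insert z y))"
      unfolding Dg_def by (rule sum.cong[OF refl]) (auto dest: Wpos)
    also have "\<dots> = real (Suc (Suc i)) * (\<Sum>x\<in>faces X (Suc (Suc i)). W x * g x)" by (rule RIW)
    also have "\<dots> = 0" using g0 unfolding mean0_def g_def by simp
    finally show ?thesis unfolding mean0_def .
  qed
  have IH: "Tq i Dg \<le> real (d - i) * (real (Suc i) - Q (Suc i)) * Y"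
    using Suc.IH[of Dg] F4 i2 unfolding Y_def by simp
  have di: "real (d - i) > 0" using i2 kd by simp
  have Gar: "Uq (Suc i) Dg \<le> real (d - Suc i) * ((1 + \<gamma> * real (Suc i)) * Y + (1 - \<gamma>) * Tq i Dg / real (d - i))"
    using garland[OF _ g1 LEs, of Dg] i2 kd unfolding Y_def by simp
  have "(1 - \<gamma>) * Tq i Dg / real (d - i) \<le> (1 - \<gamma>) * ((real (Suc i) - Q (Suc i)) * Y)"
  proof -
    have "Tq i Dg / real (d - i) \<le> (real (Suc i) - Q (Suc i)) * Y"
      using IH di by (simp add: divide_le_eq mult.commute mult.left_commute)
    then have "(1 - \<gamma>) * (Tq i Dg / real (d - i)) \<le> (1 - \<gamma>) * ((real (Suc i) - Q (Suc i)) * Y)"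
      using g1 by (intro mult_left_mono) auto
    then show ?thesis by simp
  qed
  then have "Uq (Suc i) Dg \<le> real (d - Suc i) * ((1 + \<gamma> * real (Suc i)) * Y + (1 - \<gamma>) * ((real (Suc i) - Q (Suc i)) * Y))"
    using Gar by (smt (verit) mult_left_mono of_nat_0_le_iff)
  also have "\<dots> = real (d - Suc i) * Y * (real (Suc (Suc i)) - (1 - \<gamma>) * Q (Suc i))"
    by (simp add: algebra_simps)
  also have "\<dots> \<le> real (d - Suc i) * Y * (real (Suc (Suc i)) - Q (Suc (Suc i)))"
  proof -
    have "Y \<ge> 0" unfolding Y_def by (rule Sq_nonneg)
    then show ?thesis using Qs by (intro mult_left_mono) auto
  qed
  finally have U: "Uq (Suc i) Dg \<le> real (d - Suc i) * Y * (real (Suc (Suc i)) - Q (Suc (Suc i)))" .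
  define B where "B = real (d - Suc i) * (real (Suc (Suc i)) - Q (Suc (Suc i)))"
  have B0: "B \<ge> 0" unfolding B_def using Qb[of "Suc (Suc i)"] by simp
  have S0: "Sq (Suc (Suc i)) g \<ge> 0" by (rule Sq_nonneg)
  have Y0: "Y \<ge> 0" unfolding Y_def by (rule Sq_nonneg)
  have "Y^2 \<le> Sq (Suc (Suc i)) g * (B * Y)"
    using F3 U S0 unfolding B_def by (smt (verit) mult_left_mono mult.commute mult.left_commute)
  then have "Y \<le> B * Sq (Suc (Suc i)) g"
  proof (cases "Y = 0")
    case True then show ?thesis using B0 S0 by simp
  next
    case False
    then have "Y > 0" using Y0 by simp
    moreover assume "Y^2 \<le> Sq (Suc (Suc i)) g * (B * Y)"
    ultimately show ?thesis by (simp add: power2_eq_square mult.commute mult.left_commute)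
  qed
  then show ?case using F1 unfolding B_def g_def by (simp add: mult.assoc)
qed

end


lemma quad_zero:
  fixes L D :: real
  assumes "\<And>t. 2 * t * L + t^2 * D \<le> 0"
  shows "L = 0"
proof -
  obtain a where a: "a = \<bar>D\<bar> + 1" by simp
  have pos: "a > 0" using a by simp
  define t where "t = L / a"
  have "2 * t * L + t^2 * D \<le> 0" by (rule assms)
  then have "(2 * t * L + t^2 * D) * a^2 \<le> 0"
    by (simp add: mult_nonpos_nonneg)
  moreover have "(2 * t * L + t^2 * D) * a^2 = L^2 * (2 * a + D)"
    unfolding t_def using pos by (simp add: field_simps power2_eq_square)
  ultimately have "L^2 * (2 * a + D) \<le> 0" by simp
  moreover have "2 * a + D > 0" using a by (cases "D \<ge> 0") auto
  ultimately have "L^2 \<le> 0" by (simp add: mult_le_0_iff)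
  then show ?thesis by simp
qed

lemma sum_sq_zero_pos:
  fixes p g :: "'a \<Rightarrow> real"
  assumes "finite V" "\<And>u. u \<in> V \<Longrightarrow> p u > 0" "(\<Sum>u\<in>V. p u * (g u)^2) = 0" "u \<in> V"
  shows "g u = 0"
proof -
  have nn: "\<forall>u\<in>V. 0 \<le> p u * (g u)^2" using assms(2) by (metis less_imp_le mult_nonneg_nonneg zero_le_power2)
  have "\<forall>u\<in>V. p u * (g u)^2 = 0"
    using sum_nonneg_eq_0_iff[OF assms(1), of "\<lambda>u. p u * (g u)^2"] nn assms(3) by auto
  then have "p u * (g u)^2 = 0" using assms(4) by auto
  then show ?thesis using assms(2)[OF assms(4)] by simp
qed

lemma quad_expand:
  fixes K :: "'a \<Rightarrow> 'a \<Rightarrow> real"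
  assumes Ksym: "\<And>u v. K u v = K v u"
  shows "(\<Sum>u\<in>V. \<Sum>v\<in>V. K u v * (h u + t * g u) * (h v + t * g v)) =
    (\<Sum>u\<in>V. \<Sum>v\<in>V. K u v * h u * h v) + 2 * t * (\<Sum>u\<in>V. g u * (\<Sum>v\<in>V. K u v * h v))
      + t^2 * (\<Sum>u\<in>V. \<Sum>v\<in>V. K u v * g u * g v)"
proof -
  have sw: "(\<Sum>u\<in>V. \<Sum>v\<in>V. K u v * h u * g v) = (\<Sum>u\<in>V. \<Sum>v\<in>V. K u v * g u * h v)"
    by (subst sum.swap) (simp add: Ksym mult.commute mult.left_commute)
  have "(\<Sum>u\<in>V. \<Sum>v\<in>V. K u v * (h u + t * g u) * (h v + t * g v)) =
    (\<Sum>u\<in>V. \<Sum>v\<in>V. K u v * h u * h v + t * (K u v * h u * g v) + t * (K u v * g u * h v) + t^2 * (K u v * g u * g v))"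
    by (intro sum.cong refl) (simp add: algebra_simps power2_eq_square)
  also have "\<dots> = (\<Sum>u\<in>V. \<Sum>v\<in>V. K u v * h u * h v) + t * (\<Sum>u\<in>V. \<Sum>v\<in>V. K u v * h u * g v)
     + t * (\<Sum>u\<in>V. \<Sum>v\<in>V. K u v * g u * h v) + t^2 * (\<Sum>u\<in>V. \<Sum>v\<in>V. K u v * g u * g v)"
    by (simp add: sum.distrib sum_distrib_left)
  finally have e1: "(\<Sum>u\<in>V. \<Sum>v\<in>V. K u v * (h u + t * g u) * (h v + t * g v)) =
    (\<Sum>u\<in>V. \<Sum>v\<in>V. K u v * h u * h v) + t * (\<Sum>u\<in>V. \<Sum>v\<in>V. K u v * h u * g v)
     + t * (\<Sum>u\<in>V. \<Sum>v\<in>V. K u v * g u * h v) + t^2 * (\<Sum>u\<in>V. \<Sum>v\<in>V. K u v * g u * g v)" .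
  have e3: "(\<Sum>u\<in>V. \<Sum>v\<in>V. K u v * g u * h v) = (\<Sum>u\<in>V. g u * (\<Sum>v\<in>V. K u v * h v))"
    by (simp add: sum_distrib_left mult.commute mult.left_commute)
  have ar: "\<And>A X Y C G. X = Y \<Longrightarrow> Y = G \<Longrightarrow> A + t*X + t*Y + t^2*C = A + 2*t*G + t^2*(C::real)" by simp
  show ?thesis unfolding e1 by (rule ar[OF sw e3])
qed

lemma spectral:
  fixes V :: "'a set" and p :: "'a \<Rightarrow> real" and K :: "'a \<Rightarrow> 'a \<Rightarrow> real" and c :: real
  assumes finV: "finite V" and ppos: "\<And>u. u \<in> V \<Longrightarrow> p u > 0"
    and Ksym: "\<And>u v. K u v = K v u" and c0: "c > 0"
    and rows: "\<And>u. u \<in> V \<Longrightarrow> (\<Sum>v\<in>V. K u v) = c * p u"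
    and g0M: "(\<Sum>u\<in>V. p u * g0 u) = 0" and g0nz: "u0 \<in> V" "g0 u0 \<noteq> 0"
  shows "\<exists>h R. (\<Sum>u\<in>V. p u * h u) = 0 \<and> (\<Sum>u\<in>V. p u * (h u)^2) = 1
     \<and> (\<forall>u\<in>V. (\<Sum>v\<in>V. K u v * h v) = c * R * p u * h u)
     \<and> (\<forall>g. (\<Sum>u\<in>V. p u * g u) = 0 \<longrightarrow> (\<Sum>u\<in>V. \<Sum>v\<in>V. K u v * g u * g v) \<le> c * R * (\<Sum>u\<in>V. p u * (g u)^2))"
proof -
  define M where "M g = (\<Sum>u\<in>V. p u * g u)" for g :: "'a \<Rightarrow> real"
  define N where "N g = (\<Sum>u\<in>V. p u * (g u)^2)" for g :: "'a \<Rightarrow> real"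
  define Q where "Q g = (\<Sum>u\<in>V. \<Sum>v\<in>V. K u v * g u * g v)" for g :: "'a \<Rightarrow> real"
  define S where "S = {g :: 'a \<Rightarrow> real. (\<forall>u. u \<notin> V \<longrightarrow> g u = 0) \<and> M g = 0 \<and> N g = 1}"
  define Mb where "Mb = 1 + (\<Sum>u\<in>V. 1 / p u)"
  have N0: "N g \<ge> 0" for g unfolding N_def using ppos by (intro sum_nonneg mult_nonneg_nonneg) (auto simp: less_imp_le)
  have bound: "\<bar>g u\<bar> \<le> Mb" if "g \<in> S" for g u
  proof (cases "u \<in> V")
    case True
    have "p u * (g u)^2 \<le> N g" unfolding N_def
      using finV True by (intro member_le_sum) (auto intro!: mult_nonneg_nonneg dest: ppos)
    then have "p u * (g u)^2 \<le> 1" using that unfolding S_def by simp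
    then have g2: "(g u)^2 \<le> 1 / p u" using ppos[OF True] by (simp add: field_simps)
    have "1 / p u \<le> (\<Sum>u\<in>V. 1 / p u)"
      using finV True ppos by (intro member_le_sum) (auto simp: less_imp_le)
    then have g2': "(g u)^2 \<le> Mb - 1" using g2 unfolding Mb_def by simp
    show ?thesis
    proof (cases "\<bar>g u\<bar> \<le> 1")
      case True
      have "0 \<le> (\<Sum>u\<in>V. 1 / p u)" using ppos by (intro sum_nonneg) (simp add: less_imp_le)
      then show ?thesis using True unfolding Mb_def by simp
    next
      case False
      then have "\<bar>g u\<bar> * 1 \<le> \<bar>g u\<bar> * \<bar>g u\<bar>" by (intro mult_left_mono) auto
      then have "\<bar>g u\<bar> \<le> (g u)^2" by (simp add: power2_eq_square abs_mult_self_eq)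
      then show ?thesis using g2' by simp
    qed
  next
    case False
    then show ?thesis using that unfolding S_def Mb_def
      using ppos by (simp add: add_nonneg_nonneg sum_nonneg less_imp_le)
  qed
  define B where "B = Pi\<^sub>E UNIV (\<lambda>u::'a. if u \<in> V then {-Mb..Mb} else {0::real})"
  have compB: "compact B"
  proof -
    have "compactin (product_topology (\<lambda>i. euclidean) UNIV) B"
      unfolding B_def compactin_PiE by auto
    then show ?thesis by (simp add: euclidean_product_topology)
  qed
  have SB: "S \<subseteq> B"
  proof
    fix g assume "g \<in> S"
    have "g i \<in> (if i \<in> V then {-Mb..Mb} else {0})" for i
    proof -
      have "\<bar>g i\<bar> \<le> Mb" by (rule bound[OF \<open>g \<in> S\<close>])
      then have "-Mb \<le> g i \<and> g i \<le> Mb" by linarith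
      then show ?thesis using \<open>g \<in> S\<close> unfolding S_def by auto
    qed
    then show "g \<in> B" unfolding B_def by (auto simp: PiE_iff)
  qed
  have coord: "continuous_on UNIV (\<lambda>g::'a \<Rightarrow> real. g u)" for u by simp
  have contM: "continuous_on UNIV M" unfolding M_def by (intro continuous_intros coord)
  have contN: "continuous_on UNIV N" unfolding N_def by (intro continuous_intros coord)
  have contQ: "continuous_on UNIV Q" unfolding Q_def by (intro continuous_intros coord)
  have closedS: "closed S"
  proof -
    have "S = (\<Inter>u\<in>-V. {g. g u = 0}) \<inter> {g. M g = (\<lambda>_. 0) g} \<inter> {g. N g = (\<lambda>_. 1) g}"
      unfolding S_def by auto
    moreover have "closed (\<Inter>u\<in>-V. {g::'a\<Rightarrow>real. g u = (\<lambda>_. 0) g})"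
      by (intro closed_INT ballI closed_Collect_eq coord continuous_on_const)
    moreover have "closed {g. M g = (\<lambda>_. 0) g}" by (intro closed_Collect_eq contM continuous_on_const)
    moreover have "closed {g. N g = (\<lambda>_. 1) g}" by (intro closed_Collect_eq contN continuous_on_const)
    ultimately show ?thesis by (metis closed_Int)
  qed
  have compS: "compact S"
  proof -
    have "compact (B \<inter> S)" using compB closedS by (rule compact_Int_closed)
    moreover have "B \<inter> S = S" using SB by auto
    ultimately show ?thesis by simp
  qed
  have onV: "M g = M g' \<and> N g = N g' \<and> Q g = Q g'" if "\<And>u. u \<in> V \<Longrightarrow> g u = g' u" for g g'
    unfolding M_def N_def Q_def using that by (auto intro!: sum.cong)
  have Nzero: "N g = 0 \<Longrightarrow> u \<in> V \<Longrightarrow> g u = 0" for g u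
    unfolding N_def by (rule sum_sq_zero_pos[where p=p, OF finV]) (auto intro: ppos)
  define nrm where "nrm g = (\<lambda>u. if u \<in> V then g u / sqrt (N g) else 0)" for g
  have nrm_in: "nrm g \<in> S" and nrmQ: "Q (nrm g) = Q g / N g" if "M g = 0" "N g \<noteq> 0" for g
  proof -
    have Np: "N g > 0" using N0[of g] that by simp
    have "M (nrm g) = M (\<lambda>u. g u / sqrt (N g))" using onV[of "nrm g" "\<lambda>u. g u / sqrt (N g)"] unfolding nrm_def by auto
    also have "\<dots> = M g / sqrt (N g)" unfolding M_def by (simp add: sum_divide_distrib)
    finally have m: "M (nrm g) = 0" using that by simp
    have "N (nrm g) = N (\<lambda>u. g u / sqrt (N g))" using onV[of "nrm g" "\<lambda>u. g u / sqrt (N g)"] unfolding nrm_def by auto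
    also have "\<dots> = (\<Sum>u\<in>V. p u * (g u)^2 / (sqrt (N g))^2)"
      unfolding N_def[of "\<lambda>u. g u / sqrt (N g)"] by (simp add: power_divide)
    also have "(sqrt (N g))^2 = N g" using N0[of g] by simp
    also have "(\<Sum>u\<in>V. p u * (g u)^2 / N g) = N g / N g"
      by (simp add: sum_divide_distrib[symmetric] N_def)
    finally have n: "N (nrm g) = 1" using Np by simp
    show "nrm g \<in> S" unfolding S_def using m n by (auto simp: nrm_def)
    have "Q (nrm g) = Q (\<lambda>u. g u / sqrt (N g))" using onV[of "nrm g" "\<lambda>u. g u / sqrt (N g)"] unfolding nrm_def by auto
    also have "\<dots> = (\<Sum>u\<in>V. \<Sum>v\<in>V. K u v * g u * g v / N g)" unfolding Q_def
      using Np by (intro sum.cong refl) (simp add: field_simps)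
    also have "\<dots> = Q g / N g" unfolding Q_def by (simp add: sum_divide_distrib)
    finally show "Q (nrm g) = Q g / N g" .
  qed
  have g0N: "N g0 \<noteq> 0" using Nzero[of g0 u0] g0nz by auto
  have Sne: "S \<noteq> {}" using nrm_in[of g0] g0M g0N unfolding M_def by auto
  have "continuous_on S Q" using contQ by (rule continuous_on_subset) simp
  then obtain h where hS: "h \<in> S" and hmax: "\<And>g. g \<in> S \<Longrightarrow> Q g \<le> Q h"
    using continuous_attains_sup[OF compS Sne] by blast
  define R where "R = Q h / c"
  have QhR: "Q h = c * R" unfolding R_def using c0 by simp
  have Mh: "M h = 0" and Nh: "N h = 1" using hS unfolding S_def by auto
  have allg: "Q g \<le> c * R * N g" if "M g = 0" for g
  proof (cases "N g = 0")
    case True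
    then have "Q g = Q (\<lambda>_. 0)" using onV[of g "\<lambda>_. 0"] Nzero by auto
    then show ?thesis using True unfolding Q_def by simp
  next
    case False
    then have "Q g / N g \<le> Q h" using hmax[OF nrm_in[OF that False]] nrmQ[OF that False] by simp
    moreover have "N g > 0" using N0[of g] False by simp
    ultimately show ?thesis using QhR by (simp add: divide_le_eq mult.commute)
  qed
  define e where "e u = (\<Sum>v\<in>V. K u v * h v) - c * R * p u * h u" for u
  define g where "g u = e u / p u" for u
  have Mg: "M g = 0"
  proof -
    have "M g = (\<Sum>u\<in>V. e u)" unfolding M_def g_def using ppos by (intro sum.cong) (auto dest: ppos)
    also have "\<dots> = (\<Sum>u\<in>V. \<Sum>v\<in>V. K u v * h v) - c * R * M h"
      unfolding e_def M_def by (simp add: sum_subtractf sum_distrib_left mult.assoc)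
    also have "(\<Sum>u\<in>V. \<Sum>v\<in>V. K u v * h v) = (\<Sum>v\<in>V. h v * (\<Sum>u\<in>V. K v u))"
      by (subst sum.swap) (simp add: sum_distrib_left Ksym mult.commute)
    also have "\<dots> = c * M h" unfolding M_def using rows by (simp add: sum_distrib_left mult.commute mult.left_commute)
    finally show ?thesis using Mh by simp
  qed
  have "\<And>t. 2 * t * (\<Sum>u\<in>V. g u * e u) + t^2 * (Q g - c * R * N g) \<le> 0"
  proof -
    fix t :: real
    have M2: "M (\<lambda>u. h u + t * g u) = 0" using Mh Mg unfolding M_def
      by (simp add: distrib_left sum.distrib sum_distrib_left[symmetric] mult.left_commute)
    have "Q (\<lambda>u. h u + t * g u) \<le> c * R * N (\<lambda>u. h u + t * g u)" by (rule allg[OF M2])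
    moreover have "Q (\<lambda>u. h u + t * g u) = Q h + 2 * t * (\<Sum>u\<in>V. g u * (\<Sum>v\<in>V. K u v * h v)) + t^2 * Q g"
      unfolding Q_def by (rule quad_expand[OF Ksym])
    moreover have "N (\<lambda>u. h u + t * g u) = N h + 2 * t * (\<Sum>u\<in>V. g u * (p u * h u)) + t^2 * N g"
      unfolding N_def by (simp add: sum.distrib sum_distrib_left algebra_simps power2_eq_square)
    moreover have "(\<Sum>u\<in>V. g u * e u) = (\<Sum>u\<in>V. g u * (\<Sum>v\<in>V. K u v * h v)) - c * R * (\<Sum>u\<in>V. g u * (p u * h u))"
      unfolding e_def by (simp add: sum_subtractf sum_distrib_left algebra_simps)
    ultimately have A: "c * R + 2 * t * (\<Sum>u\<in>V. g u * (\<Sum>v\<in>V. K u v * h v)) + t^2 * Q g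
        \<le> c * R * (1 + 2 * t * (\<Sum>u\<in>V. g u * (p u * h u)) + t^2 * N g)"
      and D: "(\<Sum>u\<in>V. g u * e u) = (\<Sum>u\<in>V. g u * (\<Sum>v\<in>V. K u v * h v)) - c * R * (\<Sum>u\<in>V. g u * (p u * h u))"
      using QhR Nh by simp_all
    have ar: "\<And>a G H q n. a + 2*t*G + t^2*q \<le> a*(1 + 2*t*H + t^2*n) \<Longrightarrow> 2*t*(G - a*H) + t^2*(q - a*n) \<le> (0::real)"
      by (simp add: algebra_simps)
    show "2 * t * (\<Sum>u\<in>V. g u * e u) + t^2 * (Q g - c * R * N g) \<le> 0"
      unfolding D by (rule ar[OF A])
  qed
  then have L0: "(\<Sum>u\<in>V. g u * e u) = 0" by (rule quad_zero)
  have "(\<Sum>u\<in>V. g u * e u) = (\<Sum>u\<in>V. (1 / p u) * (e u)^2)"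
    unfolding g_def by (simp add: power2_eq_square)
  then have "\<forall>u\<in>V. e u = 0"
    using sum_sq_zero_pos[OF finV, of "\<lambda>u. 1 / p u" e] L0 ppos by auto
  then have eig: "\<forall>u\<in>V. (\<Sum>v\<in>V. K u v * h v) = c * R * p u * h u" unfolding e_def by auto
  show ?thesis
    apply (rule exI[of _ h], rule exI[of _ R])
    using Mh Nh eig allg unfolding M_def N_def Q_def by blast
qed

lemma perp_to_full:
  fixes V :: "'a set" and p :: "'a \<Rightarrow> real" and K :: "'a \<Rightarrow> 'a \<Rightarrow> real" and c \<gamma> :: real
  assumes finV: "finite V"
    and Ksym: "\<And>u v. K u v = K v u"
    and rows: "\<And>u. u \<in> V \<Longrightarrow> (\<Sum>v\<in>V. K u v) = c * p u"
    and P0: "(\<Sum>u\<in>V. p u) > 0"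
    and perp: "\<And>g. (\<Sum>u\<in>V. p u * g u) = 0 \<Longrightarrow> (\<Sum>u\<in>V. \<Sum>v\<in>V. K u v * g u * g v) \<le> c * \<gamma> * (\<Sum>u\<in>V. p u * (g u)^2)"
  shows "(\<Sum>u\<in>V. \<Sum>v\<in>V. K u v * g u * g v) \<le> c * (\<gamma> * (\<Sum>u\<in>V. p u * (g u)^2) + (1 - \<gamma>) * (\<Sum>u\<in>V. p u * g u)^2 / (\<Sum>u\<in>V. p u))"
proof -
  define P where "P = (\<Sum>u\<in>V. p u)"
  define a where "a = (\<Sum>u\<in>V. p u * g u) / P"
  define g0 where "g0 u = g u - a" for u
  have gg: "g u = g0 u + a * 1" for u unfolding g0_def by simp
  have M0: "(\<Sum>u\<in>V. p u * g0 u) = 0"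
  proof -
    have "(\<Sum>u\<in>V. p u * g0 u) = (\<Sum>u\<in>V. p u * g u) - a * P"
      unfolding g0_def P_def by (simp add: right_diff_distrib sum_subtractf sum_distrib_left mult.commute)
    also have "a * P = (\<Sum>u\<in>V. p u * g u)" unfolding a_def using P0 P_def by simp
    finally show ?thesis by simp
  qed
  have Qe: "(\<Sum>u\<in>V. \<Sum>v\<in>V. K u v * g u * g v) = (\<Sum>u\<in>V. \<Sum>v\<in>V. K u v * g0 u * g0 v)
      + 2 * a * (\<Sum>u\<in>V. 1 * (\<Sum>v\<in>V. K u v * g0 v)) + a^2 * (\<Sum>u\<in>V. \<Sum>v\<in>V. K u v * 1 * 1)"
    unfolding gg by (rule quad_expand[OF Ksym])
  have z: "(\<Sum>u\<in>V. 1 * (\<Sum>v\<in>V. K u v * g0 v)) = 0"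
  proof -
    have "(\<Sum>u\<in>V. 1 * (\<Sum>v\<in>V. K u v * g0 v)) = (\<Sum>v\<in>V. g0 v * (\<Sum>u\<in>V. K v u))"
      by (simp, subst sum.swap) (simp add: sum_distrib_left Ksym mult.commute)
    also have "\<dots> = c * (\<Sum>v\<in>V. p v * g0 v)" using rows by (simp add: sum_distrib_left mult.commute mult.left_commute)
    finally show ?thesis using M0 by simp
  qed
  have o: "(\<Sum>u\<in>V. \<Sum>v\<in>V. K u v * 1 * 1) = c * P" using rows unfolding P_def by (simp add: sum_distrib_left)
  have Ne: "(\<Sum>u\<in>V. p u * (g u)^2) = (\<Sum>u\<in>V. p u * (g0 u)^2) + a^2 * P"
  proof -
    have "(\<Sum>u\<in>V. p u * (g u)^2) = (\<Sum>u\<in>V. p u * (g0 u)^2 + 2 * a * (p u * g0 u) + a^2 * p u)"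
      unfolding gg by (intro sum.cong refl) (simp add: algebra_simps power2_eq_square)
    also have "\<dots> = (\<Sum>u\<in>V. p u * (g0 u)^2) + 2 * a * (\<Sum>u\<in>V. p u * g0 u) + a^2 * P"
      unfolding P_def by (simp add: sum.distrib sum_distrib_left)
    finally show ?thesis using M0 by simp
  qed
  have aP: "(\<Sum>u\<in>V. p u * g u)^2 / P = a^2 * P" unfolding a_def using P0 unfolding P_def by (simp add: power2_eq_square)
  have pr: "(\<Sum>u\<in>V. \<Sum>v\<in>V. K u v * g0 u * g0 v) \<le> c * \<gamma> * (\<Sum>u\<in>V. p u * (g0 u)^2)" by (rule perp[OF M0])
  have ar: "Q0 + 2 * a * 0 + a^2 * (c * P) \<le> c * (\<gamma> * (N0 + a^2 * P) + (1 - \<gamma>) * Mv^2 / P)"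
    if "Q0 \<le> c * \<gamma> * N0" "Mv^2 / P = a^2 * P" for Q0 N0 Mv
  proof -
    have "(1 - \<gamma>) * Mv^2 / P = (1 - \<gamma>) * (a^2 * P)" using that(2) by (metis times_divide_eq_right)
    then show ?thesis using that(1) by (simp add: algebra_simps)
  qed
  show ?thesis unfolding Qe z o Ne P_def[symmetric] by (rule ar[OF pr aP])
qed

lemma eig_edges_const:
  fixes V :: "'a set" and p :: "'a \<Rightarrow> real" and K :: "'a \<Rightarrow> 'a \<Rightarrow> real" and c R :: real
  assumes finV: "finite V"
    and Ksym: "\<And>u v. K u v = K v u" and Knn: "\<And>u v. K u v \<ge> 0"
    and rows: "\<And>u. u \<in> V \<Longrightarrow> (\<Sum>v\<in>V. K u v) = c * p u"
    and eig: "\<And>u. u \<in> V \<Longrightarrow> (\<Sum>v\<in>V. K u v * h v) = c * R * p u * h u"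
    and R1: "R \<ge> 1" and c0: "c \<ge> 0" and N0: "(\<Sum>u\<in>V. p u * (h u)^2) \<ge> 0"
    and uv: "u \<in> V" "v \<in> V" "K u v > 0"
  shows "h u = h v"
proof -
  define N where "N = (\<Sum>u\<in>V. p u * (h u)^2)"
  have Q: "(\<Sum>u\<in>V. \<Sum>v\<in>V. K u v * h u * h v) = c * R * N"
  proof -
    have "(\<Sum>u\<in>V. \<Sum>v\<in>V. K u v * h u * h v) = (\<Sum>u\<in>V. h u * (\<Sum>v\<in>V. K u v * h v))"
      by (simp add: sum_distrib_left mult.commute mult.left_commute)
    also have "\<dots> = (\<Sum>u\<in>V. c * R * (p u * (h u)^2))" using eig by (intro sum.cong refl) (simp add: power2_eq_square)
    finally show ?thesis unfolding N_def by (simp add: sum_distrib_left)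
  qed
  have A: "(\<Sum>u\<in>V. \<Sum>v\<in>V. K u v * (h u - h v)^2) = 2 * c * N - 2 * (\<Sum>u\<in>V. \<Sum>v\<in>V. K u v * h u * h v)"
  proof -
    have "(\<Sum>u\<in>V. \<Sum>v\<in>V. K u v * (h u - h v)^2) = (\<Sum>u\<in>V. \<Sum>v\<in>V. K u v * (h u)^2 + K u v * (h v)^2 - 2 * (K u v * h u * h v))"
      by (intro sum.cong refl) (simp add: power2_eq_square algebra_simps)
    also have "\<dots> = (\<Sum>u\<in>V. \<Sum>v\<in>V. K u v * (h u)^2) + (\<Sum>u\<in>V. \<Sum>v\<in>V. K u v * (h v)^2) - 2 * (\<Sum>u\<in>V. \<Sum>v\<in>V. K u v * h u * h v)"
      by (simp add: sum.distrib sum_subtractf sum_distrib_left)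
    also have "(\<Sum>u\<in>V. \<Sum>v\<in>V. K u v * (h u)^2) = c * N"
      unfolding N_def using rows by (simp add: sum_distrib_right[symmetric] sum_distrib_left mult.assoc)
    also have "(\<Sum>u\<in>V. \<Sum>v\<in>V. K u v * (h v)^2) = (\<Sum>v\<in>V. \<Sum>u\<in>V. K v u * (h v)^2)"
      by (subst sum.swap) (simp add: Ksym)
    also have "\<dots> = c * N"
      unfolding N_def using rows by (simp add: sum_distrib_right[symmetric] sum_distrib_left mult.assoc)
    finally show ?thesis by simp
  qed
  have "2 * c * N - 2 * (c * R * N) \<le> 0"
  proof -
    have "c * N * 1 \<le> c * N * R" using R1 c0 N0 unfolding N_def
      by (intro mult_left_mono mult_nonneg_nonneg) auto
    then have "c * N \<le> c * R * N" by (simp add: mult.commute mult.left_commute)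
    then show ?thesis by simp
  qed
  then have S0: "(\<Sum>u\<in>V. \<Sum>v\<in>V. K u v * (h u - h v)^2) \<le> 0" using A Q by simp
  have nn: "\<And>u v. 0 \<le> K u v * (h u - h v)^2" using Knn by simp
  have "(\<Sum>u\<in>V. \<Sum>v\<in>V. K u v * (h u - h v)^2) = 0"
    using S0 by (meson antisym nn sum_nonneg)
  then have "\<forall>u\<in>V. (\<Sum>v\<in>V. K u v * (h u - h v)^2) = 0"
    using sum_nonneg_eq_0_iff[OF finV, of "\<lambda>u. \<Sum>v\<in>V. K u v * (h u - h v)^2"] nn by (simp add: sum_nonneg)
  then have "(\<Sum>v\<in>V. K u v * (h u - h v)^2) = 0" using uv by auto
  then have "K u v * (h u - h v)^2 = 0" using sum_nonneg_eq_0_iff[OF finV, of "\<lambda>v. K u v * (h u - h v)^2"] nn uv by auto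
  then show ?thesis using uv by simp
qed



lemma rem_if: "finite A \<Longrightarrow> (\<Sum>x\<in>A - {a}. f x) = (\<Sum>x\<in>A. if x \<noteq> a then f x else 0)"
proof -
  assume "finite A"
  have "A - {a} = {x\<in>A. x \<noteq> a}" by auto
  then show ?thesis using \<open>finite A\<close> by (simp add: sum.inter_filter)
qed

context cplx
begin

definition lkK where "lkK s u v = (if u = v then 0 else W (insert u (insert v s)))"

lemma lkK_sym: "lkK s u v = lkK s v u"
  unfolding lkK_def by (simp add: insert_commute)

lemma lkK_nn: "lkK s u v \<ge> 0"
  unfolding lkK_def using W_nonneg by simp

lemma lkV_sub: "link_vertices X s \<subseteq> Vx - s"
  unfolding link_vertices_def Vx_def by auto

lemma finite_lkV: "finite (link_vertices X s)"
  using lkV_sub finite_Vx finite_subset by blast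

lemma not_lkV_W: "u \<in> Vx - s \<Longrightarrow> u \<notin> link_vertices X s \<Longrightarrow> W (insert u s) = 0"
  unfolding link_vertices_def by (auto simp: W_zero)

lemma not_lkV_W2: "u \<in> Vx - s \<Longrightarrow> u \<notin> link_vertices X s \<Longrightarrow> W (insert u (insert v s)) = 0"
  unfolding link_vertices_def
  by (rule W_zero) (metis DiffD2 down insert_commute mem_Collect_eq subset_insertI)

lemma conv_lkV:
  assumes "\<And>u. u \<in> Vx - s \<Longrightarrow> u \<notin> link_vertices X s \<Longrightarrow> F u = 0"
  shows "(\<Sum>u\<in>Vx - s. F u) = (\<Sum>u\<in>link_vertices X s. F u)"
  by (rule sum.mono_neutral_right) (use assms lkV_sub finite_Vx in auto)

lemma lkV_pos: "u \<in> link_vertices X s \<Longrightarrow> W (insert u s) > 0"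
  unfolding link_vertices_def by (simp add: W_pos)

lemma row_conv:
  assumes sX: "finite s" and u: "u \<in> link_vertices X s"
  shows "(\<Sum>v\<in>Vx - insert u s. W (insert v (insert u s)) * F v) = (\<Sum>v\<in>link_vertices X s. lkK s u v * F v)"
proof -
  have us: "u \<in> Vx - s" using u lkV_sub by auto
  have "(\<Sum>v\<in>Vx - insert u s. W (insert v (insert u s)) * F v) = (\<Sum>v\<in>(Vx - s) - {u}. lkK s u v * F v)"
    by (rule sum.cong) (auto simp: lkK_def insert_commute)
  also have "\<dots> = (\<Sum>v\<in>Vx - s. lkK s u v * F v)"
    using us finite_Vx by (subst sum.remove[of "Vx - s" u]) (auto simp: lkK_def)
  also have "\<dots> = (\<Sum>v\<in>link_vertices X s. lkK s u v * F v)"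
    by (rule conv_lkV) (auto simp: lkK_def not_lkV_W2 insert_commute)
  finally show ?thesis .
qed

lemma rows_lk:
  assumes sX: "finite s" and u: "u \<in> link_vertices X s"
  shows "(\<Sum>v\<in>link_vertices X s. lkK s u v) = (real (d - card s) - 1) * W (insert u s)"
proof -
  have us: "u \<notin> s" using u unfolding link_vertices_def by auto
  have "(\<Sum>v\<in>link_vertices X s. lkK s u v * 1) = (\<Sum>v\<in>Vx - insert u s. W (insert v (insert u s)) * 1)"
    by (rule row_conv[symmetric, OF sX u])
  also have "\<dots> = real (d - card (insert u s)) * W (insert u s)" using W_ext by simp
  also have "real (d - card (insert u s)) = real (d - card s) - 1"
  proof -
    have "insert u s \<in> X" using u unfolding link_vertices_def by auto
    then have "card (insert u s) \<le> d" by (rule card_le)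
    then show ?thesis using us sX by (simp add: of_nat_diff)
  qed
  finally show ?thesis by simp
qed

lemma QLE_conv:
  assumes "finite s"
  shows "(\<Sum>u\<in>Vx - s. \<Sum>v\<in>Vx - s - {u}. W (insert u (insert v s)) * g u * g v)
     = (\<Sum>u\<in>link_vertices X s. \<Sum>v\<in>link_vertices X s. lkK s u v * g u * g v)"
proof -
  have "(\<Sum>u\<in>Vx - s. \<Sum>v\<in>Vx - s - {u}. W (insert u (insert v s)) * g u * g v)
      = (\<Sum>u\<in>Vx - s. \<Sum>v\<in>Vx - s. lkK s u v * g u * g v)"
  proof (rule sum.cong[OF refl])
    fix u assume us: "u \<in> Vx - s"
    have "(\<Sum>v\<in>Vx - s. lkK s u v * g u * g v) = lkK s u u * g u * g u + (\<Sum>v\<in>Vx - s - {u}. lkK s u v * g u * g v)"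
      using us finite_Vx by (subst sum.remove[of "Vx - s" u]) auto
    also have "\<dots> = (\<Sum>v\<in>Vx - s - {u}. W (insert u (insert v s)) * g u * g v)"
    proof -
      have "(\<Sum>v\<in>Vx - s - {u}. lkK s u v * g u * g v) = (\<Sum>v\<in>Vx - s - {u}. W (insert u (insert v s)) * g u * g v)"
      proof (rule sum.cong[OF refl])
        fix v assume "v \<in> Vx - s - {u}"
        then have "u \<noteq> v" by auto
        then show "lkK s u v * g u * g v = W (insert u (insert v s)) * g u * g v" by (simp add: lkK_def)
      qed
      then show ?thesis by (simp add: lkK_def)
    qed
    finally show "(\<Sum>v\<in>Vx - s - {u}. W (insert u (insert v s)) * g u * g v) = (\<Sum>v\<in>Vx - s. lkK s u v * g u * g v)" by simp
  qed
  also have "\<dots> = (\<Sum>u\<in>link_vertices X s. \<Sum>v\<in>Vx - s. lkK s u v * g u * g v)"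
  proof (rule conv_lkV)
    fix u assume "u \<in> Vx - s" "u \<notin> link_vertices X s"
    then have "\<And>v. lkK s u v = 0" by (simp add: lkK_def not_lkV_W2)
    then show "(\<Sum>v\<in>Vx - s. lkK s u v * g u * g v) = 0" by simp
  qed
  also have "\<dots> = (\<Sum>u\<in>link_vertices X s. \<Sum>v\<in>link_vertices X s. lkK s u v * g u * g v)"
  proof (rule sum.cong[OF refl], rule conv_lkV)
    fix u v assume "v \<in> Vx - s" "v \<notin> link_vertices X s"
    then have "W (insert v (insert u s)) = 0" by (rule not_lkV_W2)
    then have "lkK s u v = 0" by (simp add: lkK_def insert_commute)
    then show "lkK s u v * g u * g v = 0" by simp
  qed
  finally show ?thesis .
qed

lemma LE_iff_V:
  assumes "finite s"
  shows "LE s \<gamma> \<longleftrightarrow> (\<forall>g. (\<Sum>u\<in>link_vertices X s. \<Sum>v\<in>link_vertices X s. lkK s u v * g u * g v)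
     \<le> (real (d - card s) - 1) * (\<gamma> * (\<Sum>u\<in>link_vertices X s. W (insert u s) * (g u)^2)
       + (1 - \<gamma>) * (\<Sum>u\<in>link_vertices X s. W (insert u s) * g u)^2 / (\<Sum>u\<in>link_vertices X s. W (insert u s))))"
proof -
  have P: "(\<Sum>u\<in>link_vertices X s. W (insert u s)) = real (d - card s) * W s"
    using W_ext[of s] conv_lkV[of s "\<lambda>u. W (insert u s)"] not_lkV_W by simp
  have N: "(\<Sum>u\<in>Vx - s. W (insert u s) * (g u)^2) = (\<Sum>u\<in>link_vertices X s. W (insert u s) * (g u)^2)" for g
    by (rule conv_lkV) (simp add: not_lkV_W)
  have M: "(\<Sum>u\<in>Vx - s. W (insert u s) * g u) = (\<Sum>u\<in>link_vertices X s. W (insert u s) * g u)" for g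
    by (rule conv_lkV) (simp add: not_lkV_W)
  show ?thesis unfolding LE_def QLE_conv[OF assms] N M P ..
qed

lemma link_garland:
  assumes fs: "finite s" and cs: "card s + 2 \<le> d"
  shows "real (d - card s - 2) * (\<Sum>u\<in>Vx - s. \<Sum>v\<in>Vx - s - {u}. W (insert u (insert v s)) * h u * h v)
     = (\<Sum>u\<in>Vx - s. \<Sum>v\<in>Vx - insert u s. \<Sum>v'\<in>Vx - insert u s - {v}. W (insert v (insert v' (insert u s))) * h v * h v')"
proof -
  define A where "A = Vx - s"
  have fA: "finite A" unfolding A_def using finite_Vx by simp
  define T where "T u v v' = (if v \<noteq> u \<and> v' \<noteq> u \<and> v' \<noteq> v then W (insert u (insert v (insert v' s))) * h v * h v' else 0)" for u v v'
  have R: "(\<Sum>u\<in>Vx - s. \<Sum>v\<in>Vx - insert u s. \<Sum>v'\<in>Vx - insert u s - {v}. W (insert v (insert v' (insert u s))) * h v * h v')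
      = (\<Sum>u\<in>A. \<Sum>v\<in>A. \<Sum>v'\<in>A. T u v v')"
  proof (rule sum.cong)
    show "Vx - s = A" unfolding A_def ..
  next
    fix u assume "u \<in> A"
    have e1: "Vx - insert u s = {v\<in>A. v \<noteq> u}" unfolding A_def by auto
    have "(\<Sum>v\<in>Vx - insert u s. \<Sum>v'\<in>Vx - insert u s - {v}. W (insert v (insert v' (insert u s))) * h v * h v')
       = (\<Sum>v\<in>A. if v \<noteq> u then (\<Sum>v'\<in>{v'\<in>A. v' \<noteq> u \<and> v' \<noteq> v}. W (insert v (insert v' (insert u s))) * h v * h v') else 0)"
      unfolding e1 using fA by (subst sum.inter_filter[symmetric]) (auto intro!: sum.cong)
    also have "\<dots> = (\<Sum>v\<in>A. \<Sum>v'\<in>A. T u v v')"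
    proof (rule sum.cong[OF refl])
      fix v assume "v \<in> A"
      show "(if v \<noteq> u then (\<Sum>v'\<in>{v'\<in>A. v' \<noteq> u \<and> v' \<noteq> v}. W (insert v (insert v' (insert u s))) * h v * h v') else 0)
          = (\<Sum>v'\<in>A. T u v v')"
        unfolding T_def using fA by (subst sum.inter_filter) (auto simp: insert_commute intro!: sum.cong)
    qed
    finally show "(\<Sum>v\<in>Vx - insert u s. \<Sum>v'\<in>Vx - insert u s - {v}. W (insert v (insert v' (insert u s))) * h v * h v')
       = (\<Sum>v\<in>A. \<Sum>v'\<in>A. T u v v')" .
  qed
  have sw: "(\<Sum>u\<in>A. \<Sum>v\<in>A. \<Sum>v'\<in>A. T u v v') = (\<Sum>v\<in>A. \<Sum>v'\<in>A. \<Sum>u\<in>A. T u v v')"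
    by (subst sum.swap) (rule sum.cong[OF refl], rule sum.swap)
  have inner: "(\<Sum>u\<in>A. T u v v') = (if v' \<noteq> v then real (d - card s - 2) * (W (insert v (insert v' s)) * h v * h v') else 0)"
    if v: "v \<in> A" "v' \<in> A" for v v'
  proof (cases "v' = v")
    case True then show ?thesis unfolding T_def by simp
  next
    case False
    define y where "y = insert v (insert v' s)"
    have Ay: "{u\<in>A. v \<noteq> u \<and> v' \<noteq> u} = Vx - y" unfolding y_def A_def by auto
    have cy: "card y = card s + 2" unfolding y_def using v False fs unfolding A_def by auto
    have "(\<Sum>u\<in>A. T u v v') = (\<Sum>u\<in>{u\<in>A. v \<noteq> u \<and> v' \<noteq> u}. W (insert u y) * (h v * h v'))"
      unfolding T_def y_def using fA False by (subst sum.inter_filter) (auto intro!: sum.cong)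
    also have "\<dots> = (\<Sum>u\<in>Vx - y. W (insert u y)) * (h v * h v')" unfolding Ay by (simp add: sum_distrib_right)
    also have "\<dots> = real (d - card s - 2) * (W y * h v * h v')" using W_ext[of y] cy by simp
    finally show ?thesis using False unfolding y_def by simp
  qed
  have L: "real (d - card s - 2) * (\<Sum>u\<in>Vx - s. \<Sum>v\<in>Vx - s - {u}. W (insert u (insert v s)) * h u * h v)
     = (\<Sum>v\<in>A. \<Sum>v'\<in>A. if v' \<noteq> v then real (d - card s - 2) * (W (insert v (insert v' s)) * h v * h v') else 0)"
  proof -
    have "\<And>v. (\<Sum>v'\<in>A - {v}. W (insert v (insert v' s)) * h v * h v') = (\<Sum>v'\<in>A. if v' \<noteq> v then W (insert v (insert v' s)) * h v * h v' else 0)"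
      using fA by (rule rem_if)
    then show ?thesis unfolding A_def[symmetric]
      by (simp add: sum_distrib_left if_distrib cong: if_cong)
  qed
  show ?thesis unfolding R sw L using inner by (auto intro!: sum.cong)
qed

lemma lk_conn_const:
  assumes conn: "graph_connected (link_vertices X s) (link_edge X s)"
    and edge: "\<And>u v. u \<in> link_vertices X s \<Longrightarrow> v \<in> link_vertices X s \<Longrightarrow> link_edge X s u v \<Longrightarrow> h u = h v"
    and u: "u \<in> link_vertices X s" and v: "v \<in> link_vertices X s"
  shows "h u = h v"
proof -
  let ?V = "link_vertices X s"
  have "(\<lambda>a b. a \<in> ?V \<and> b \<in> ?V \<and> link_edge X s a b)\<^sup>*\<^sup>* u v"
    using conn u v unfolding graph_connected_def by blast
  then show ?thesis
  proof (induction rule: rtranclp_induct)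
    case base then show ?case by simp
  next
    case (step y z) then show ?case using edge by metis
  qed
qed

lemma lk_edge_pos: "link_edge X s u v \<Longrightarrow> lkK s u v > 0"
  unfolding link_edge_def lkK_def by (simp add: W_pos)

lemma trickle:
  assumes sX: "s \<in> X" and cs: "card s + 3 \<le> d" and mu1: "\<mu> < 1"
    and LEu: "\<And>u. u \<in> link_vertices X s \<Longrightarrow> LE (insert u s) \<mu>"
    and conn: "graph_connected (link_vertices X s) (link_edge X s)"
  shows "LE s (\<mu> / (1 - \<mu>))"
proof -
  define V where "V = link_vertices X s"
  define p where "p u = W (insert u s)" for u
  define K where "K = lkK s"
  define c where "c = real (d - card s) - 1"
  define \<gamma>' where "\<gamma>' = \<mu> / (1 - \<mu>)"
  define M where "M g = (\<Sum>u\<in>V. p u * g u)" for g :: "'a \<Rightarrow> real"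
  define N where "N g = (\<Sum>u\<in>V. p u * (g u)^2)" for g :: "'a \<Rightarrow> real"
  define Q where "Q g = (\<Sum>u\<in>V. \<Sum>v\<in>V. K u v * g u * g v)" for g :: "'a \<Rightarrow> real"
  have fs: "finite s" using fin_face sX by simp
  have finV: "finite V" unfolding V_def by (rule finite_lkV)
  have ppos: "\<And>u. u \<in> V \<Longrightarrow> p u > 0" unfolding V_def p_def by (rule lkV_pos)
  have Ksym: "\<And>u v. K u v = K v u" unfolding K_def by (rule lkK_sym)
  have Knn: "\<And>u v. K u v \<ge> 0" unfolding K_def by (rule lkK_nn)
  have c0: "c > 1" unfolding c_def using cs by (simp add: of_nat_diff)
  have rows: "\<And>u. u \<in> V \<Longrightarrow> (\<Sum>v\<in>V. K u v) = c * p u"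
    unfolding V_def K_def c_def p_def using rows_lk[OF fs] by simp
  have Psum: "(\<Sum>u\<in>V. p u) > 0"
  proof -
    obtain t where t: "t \<in> X" "s \<subseteq> t" "card t = d" using ext_top[OF sX] by blast
    have "card s < card t" using t cs by simp
    then have "s \<noteq> t" by auto
    then obtain u where "u \<in> t" "u \<notin> s" using t by auto
    then have uV: "u \<in> V" unfolding V_def link_vertices_def using t down[of t "insert u s"] by auto
    have "p u \<le> (\<Sum>u\<in>V. p u)" using finV uV ppos by (intro member_le_sum) (auto simp: less_imp_le)
    then show ?thesis using ppos[OF uV] by simp
  qed
  have perp: "Q g \<le> c * \<gamma>' * N g" if Mg: "M g = 0" for g
  proof (rule ccontr)
    assume "\<not> Q g \<le> c * \<gamma>' * N g"
    then have gt: "Q g > c * \<gamma>' * N g" by simp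
    have "\<exists>u0\<in>V. g u0 \<noteq> 0"
    proof (rule ccontr)
      assume "\<not> (\<exists>u0\<in>V. g u0 \<noteq> 0)"
      then have "Q g = 0" "N g = 0" unfolding Q_def N_def by auto
      then show False using gt by simp
    qed
    then obtain u0 where u0: "u0 \<in> V" "g u0 \<noteq> 0" by blast
    have Ng: "N g > 0"
    proof -
      have "p u0 * (g u0)^2 > 0" using ppos[OF u0(1)] u0(2) by simp
      also have "p u0 * (g u0)^2 \<le> N g" unfolding N_def using finV u0(1)
        by (intro member_le_sum) (auto intro!: mult_nonneg_nonneg dest: ppos)
      finally show ?thesis .
    qed
    obtain h R where Mh: "M h = 0" and Nh: "N h = 1"
      and eig: "\<forall>u\<in>V. (\<Sum>v\<in>V. K u v * h v) = c * R * p u * h u"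
      and allg: "\<forall>g. M g = 0 \<longrightarrow> Q g \<le> c * R * N g"
      using spectral[OF finV ppos Ksym _ rows, of g u0] c0 Mg u0 unfolding M_def N_def Q_def by auto
    have "c * \<gamma>' * N g < c * R * N g" using gt allg Mg by force
    then have gR: "\<gamma>' < R" using c0 Ng by (simp add: mult.commute mult.left_commute)
    have Qh: "Q h = c * R"
    proof -
      have "Q h = (\<Sum>u\<in>V. h u * (\<Sum>v\<in>V. K u v * h v))"
        unfolding Q_def by (simp add: sum_distrib_left mult.commute mult.left_commute)
      also have "\<dots> = (\<Sum>u\<in>V. c * R * (p u * (h u)^2))" using eig by (intro sum.cong refl) (simp add: power2_eq_square)
      finally show ?thesis using Nh unfolding N_def by (simp add: sum_distrib_left[symmetric])
    qed
    have G: "real (d - card s - 2) * Q h = (\<Sum>u\<in>V. \<Sum>v\<in>Vx - insert u s. \<Sum>v'\<in>Vx - insert u s - {v}. W (insert v (insert v' (insert u s))) * h v * h v')"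
    proof -
      have "real (d - card s - 2) * Q h = (\<Sum>u\<in>Vx - s. \<Sum>v\<in>Vx - insert u s. \<Sum>v'\<in>Vx - insert u s - {v}. W (insert v (insert v' (insert u s))) * h v * h v')"
        unfolding Q_def K_def V_def QLE_conv[OF fs, symmetric] using link_garland[OF fs] cs by simp
      also have "\<dots> = (\<Sum>u\<in>V. \<Sum>v\<in>Vx - insert u s. \<Sum>v'\<in>Vx - insert u s - {v}. W (insert v (insert v' (insert u s))) * h v * h v')"
        unfolding V_def
      proof (rule conv_lkV)
        fix u assume "u \<in> Vx - s" "u \<notin> link_vertices X s"
        then have "insert u s \<notin> X" unfolding link_vertices_def by auto
        then have "\<And>v v'. W (insert v (insert v' (insert u s))) = 0"
          by (metis W_zero down subset_insertI insert_subset)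
        then show "(\<Sum>v\<in>Vx - insert u s. \<Sum>v'\<in>Vx - insert u s - {v}. W (insert v (insert v' (insert u s))) * h v * h v') = 0" by simp
      qed
      finally show ?thesis .
    qed
    have bound_u: "(\<Sum>v\<in>Vx - insert u s. \<Sum>v'\<in>Vx - insert u s - {v}. W (insert v (insert v' (insert u s))) * h v * h v')
        \<le> (c - 1) * (\<mu> * (\<Sum>v\<in>V. K u v * (h v)^2) + (1 - \<mu>) * (c * R * p u * h u)^2 / (c * p u))"
      if uV: "u \<in> V" for u
    proof -
      have us: "u \<notin> s" and usX: "insert u s \<in> X" using uV unfolding V_def link_vertices_def by auto
      have fus: "finite (insert u s)" using fs by simp
      have cus: "card (insert u s) = card s + 1" using us fs by simp
      have LEi: "LE (insert u s) \<mu>" using LEu uV unfolding V_def by simp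
      have e1: "real (d - card (insert u s)) - 1 = c - 1" unfolding c_def cus using cs by (simp add: of_nat_diff)
      have e2: "real (d - card (insert u s)) * W (insert u s) = c * p u" unfolding c_def p_def cus using cs by (simp add: of_nat_diff)
      have s1: "(\<Sum>v\<in>Vx - insert u s. W (insert v (insert u s)) * (h v)^2) = (\<Sum>v\<in>V. K u v * (h v)^2)"
        unfolding V_def K_def by (rule row_conv[OF fs uV[unfolded V_def]])
      have s2: "(\<Sum>v\<in>Vx - insert u s. W (insert v (insert u s)) * h v) = c * R * p u * h u"
        using row_conv[OF fs uV[unfolded V_def], of h] eig uV unfolding V_def K_def by simp
      have "(\<Sum>v\<in>Vx - insert u s. \<Sum>v'\<in>Vx - insert u s - {v}. W (insert v (insert v' (insert u s))) * h v * h v')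
        \<le> (real (d - card (insert u s)) - 1) * (\<mu> * (\<Sum>v\<in>Vx - insert u s. W (insert v (insert u s)) * (h v)^2)
          + (1 - \<mu>) * (\<Sum>v\<in>Vx - insert u s. W (insert v (insert u s)) * h v)^2 / (real (d - card (insert u s)) * W (insert u s)))"
        using LEi unfolding LE_def by blast
      then show ?thesis unfolding e1 e2 s1 s2 .
    qed
    have sum1: "(\<Sum>u\<in>V. \<Sum>v\<in>V. K u v * (h v)^2) = c"
    proof -
      have "(\<Sum>u\<in>V. \<Sum>v\<in>V. K u v * (h v)^2) = (\<Sum>v\<in>V. (h v)^2 * (\<Sum>u\<in>V. K v u))"
        by (subst sum.swap) (simp add: sum_distrib_left sum_distrib_right Ksym mult.commute)
      also have "\<dots> = c * N h" unfolding N_def using rows by (simp add: sum_distrib_left mult.commute mult.left_commute mult.assoc)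
      finally show ?thesis using Nh by simp
    qed
    have sum2: "(\<Sum>u\<in>V. (c * R * p u * h u)^2 / (c * p u)) = c * R^2"
    proof -
      have "(\<Sum>u\<in>V. (c * R * p u * h u)^2 / (c * p u)) = (\<Sum>u\<in>V. c * R^2 * (p u * (h u)^2))"
        using c0 ppos by (intro sum.cong refl) (auto simp: power2_eq_square field_simps dest: ppos)
      also have "\<dots> = c * R^2 * N h" unfolding N_def by (simp add: sum_distrib_left)
      finally show ?thesis using Nh by simp
    qed
    have "real (d - card s - 2) * Q h \<le> (\<Sum>u\<in>V. (c - 1) * (\<mu> * (\<Sum>v\<in>V. K u v * (h v)^2) + (1 - \<mu>) * (c * R * p u * h u)^2 / (c * p u)))"
      unfolding G by (rule sum_mono) (rule bound_u)
    also have "\<dots> = (c - 1) * (\<mu> * c + (1 - \<mu>) * (c * R^2))"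
    proof -
      have lin: "\<And>A B :: 'a \<Rightarrow> real. (\<Sum>u\<in>V. (c - 1) * (\<mu> * A u + (1 - \<mu>) * B u)) = (c - 1) * (\<mu> * (\<Sum>u\<in>V. A u) + (1 - \<mu>) * (\<Sum>u\<in>V. B u))"
        by (simp only: sum_distrib_left[symmetric] sum.distrib distrib_left mult.assoc)
      show ?thesis using lin[of "\<lambda>u. \<Sum>v\<in>V. K u v * (h v)^2" "\<lambda>u. (c * R * p u * h u)^2 / (c * p u)"] sum1 sum2 by simp
    qed
    finally have "real (d - card s - 2) * Q h \<le> (c - 1) * (\<mu> * c + (1 - \<mu>) * (c * R^2))" .
    moreover have cm2: "real (d - card s - 2) = c - 1" unfolding c_def using cs by (simp add: of_nat_diff)
    ultimately have "(c - 1) * (c * R) \<le> (c - 1) * (\<mu> * c + (1 - \<mu>) * (c * R^2))" using Qh by simp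
    then have "c * R \<le> \<mu> * c + (1 - \<mu>) * (c * R^2)" using c0 by (simp add: mult_le_cancel_left)
    then have "c * R \<le> c * (\<mu> + (1 - \<mu>) * R^2)" by (simp add: algebra_simps)
    then have Rin: "R \<le> \<mu> + (1 - \<mu>) * R^2" using c0 by (simp add: mult_le_cancel_left)
    have R1: "R < 1"
    proof (rule ccontr)
      assume "\<not> R < 1"
      then have R1: "R \<ge> 1" by simp
      have N0: "(\<Sum>u\<in>V. p u * (h u)^2) \<ge> 0" using Nh unfolding N_def by simp
      have edge: "h u = h v" if "u \<in> V" "v \<in> V" "link_edge X s u v" for u v
        using eig_edges_const[OF finV Ksym Knn rows, of h R u v] eig R1 c0 N0 that lk_edge_pos[OF that(3)]
        unfolding K_def by auto
      have "V \<noteq> {}" using Nh unfolding N_def by auto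
      then obtain u0 where u0: "u0 \<in> V" by blast
      have edge': "\<And>u v. u \<in> link_vertices X s \<Longrightarrow> v \<in> link_vertices X s \<Longrightarrow> link_edge X s u v \<Longrightarrow> h u = h v"
        using edge unfolding V_def by blast
      have const: "\<And>v. v \<in> V \<Longrightarrow> h v = h u0"
        using lk_conn_const[where h=h, OF conn edge'] u0 unfolding V_def by blast
      have "M h = h u0 * (\<Sum>u\<in>V. p u)" unfolding M_def using const by (simp add: sum_distrib_left mult.commute)
      then have "h u0 = 0" using Mh Psum by simp
      then have "N h = 0" unfolding N_def using const by simp
      then show False using Nh by simp
    qed
    have "(R - 1) * ((1 - \<mu>) * R - \<mu>) = \<mu> + (1 - \<mu>) * R^2 - R" by (simp add: algebra_simps power2_eq_square)
    then have "(R - 1) * ((1 - \<mu>) * R - \<mu>) \<ge> 0" using Rin by linarith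
    then have "(1 - \<mu>) * R - \<mu> \<le> 0" using R1 by (simp add: zero_le_mult_iff)
    then have "R * (1 - \<mu>) \<le> \<mu>" by (simp add: mult.commute)
    then have "R \<le> \<gamma>'" unfolding \<gamma>'_def using mu1 by (simp add: pos_le_divide_eq)
    then show False using gR by simp
  qed
  have full: "Q g \<le> c * (\<gamma>' * N g + (1 - \<gamma>') * (M g)^2 / (\<Sum>u\<in>V. p u))" for g
    unfolding Q_def N_def M_def
    by (rule perp_to_full[OF finV Ksym rows Psum]) (use perp in \<open>auto simp: Q_def N_def M_def\<close>)
  show ?thesis
    unfolding LE_iff_V[OF fs] using full unfolding Q_def N_def M_def V_def K_def p_def c_def \<gamma>'_def by blast
qed

lemma lk_Psum:
  assumes sX: "s \<in> X" and cs: "card s < d"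
  shows "(\<Sum>u\<in>link_vertices X s. W (insert u s)) > 0"
proof -
  obtain t where t: "t \<in> X" "s \<subseteq> t" "card t = d" using ext_top[OF sX] by blast
  have "card s < card t" using t cs by simp
  then have "s \<noteq> t" by auto
  then obtain u where "u \<in> t" "u \<notin> s" using t by auto
  then have uV: "u \<in> link_vertices X s" unfolding link_vertices_def using t down[of t "insert u s"] by auto
  have "W (insert u s) \<le> (\<Sum>u\<in>link_vertices X s. W (insert u s))"
    using finite_lkV uV by (intro member_le_sum) (auto simp: W_nonneg)
  then show ?thesis using lkV_pos[OF uV] by simp
qed

lemma lw_eq:
  assumes cs: "card s + 2 = d" and u: "u \<in> link_vertices X s" and v: "v \<in> link_vertices X s"
  shows "link_weight X d w s u v = lkK s u v / W s"
proof (cases "u = v")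
  case True then show ?thesis unfolding link_weight_def lkK_def by simp
next
  case False
  have us: "u \<notin> s" "v \<notin> s" using u v unfolding link_vertices_def by auto
  have "d - card s = 2" using cs by simp
  then have c2: "(d - card s) choose 2 = 1" by simp
  have "link_pi X d w s 2 {u, v} = W (insert u (insert v s)) / W s"
    unfolding link_pi_def W_def[symmetric] TF_def[symmetric] using us False c2
    by (simp add: insert_commute)
  then show ?thesis using False unfolding link_weight_def lkK_def by simp
qed

lemma base:
  assumes sX: "s \<in> X" and cs: "card s + 2 = d" and g1: "\<gamma> < 1"
    and ose: "one_sided_expander (link_vertices X s) (link_weight X d w s) \<gamma>"
  shows "LE s \<gamma>"
proof -
  define V where "V = link_vertices X s"
  define p where "p u = W (insert u s)" for u
  define K where "K = lkK s"
  define c where "c = real (d - card s) - 1"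
  define M where "M g = (\<Sum>u\<in>V. p u * g u)" for g :: "'a \<Rightarrow> real"
  define N where "N g = (\<Sum>u\<in>V. p u * (g u)^2)" for g :: "'a \<Rightarrow> real"
  define Q where "Q g = (\<Sum>u\<in>V. \<Sum>v\<in>V. K u v * g u * g v)" for g :: "'a \<Rightarrow> real"
  have fs: "finite s" using fin_face sX by simp
  have finV: "finite V" unfolding V_def by (rule finite_lkV)
  have ppos: "\<And>u. u \<in> V \<Longrightarrow> p u > 0" unfolding V_def p_def by (rule lkV_pos)
  have Ksym: "\<And>u v. K u v = K v u" unfolding K_def by (rule lkK_sym)
  have c1: "c = 1" unfolding c_def using cs by auto
  have rows: "\<And>u. u \<in> V \<Longrightarrow> (\<Sum>v\<in>V. K u v) = c * p u"
    unfolding V_def K_def c_def p_def using rows_lk[OF fs] by simp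
  have Psum: "(\<Sum>u\<in>V. p u) > 0" unfolding V_def p_def using lk_Psum[OF sX] cs by simp
  have Ws: "W s > 0" using W_pos[OF sX] .
  have perp: "Q g \<le> c * \<gamma> * N g" if Mg: "M g = 0" for g
  proof (rule ccontr)
    assume "\<not> Q g \<le> c * \<gamma> * N g"
    then have gt: "Q g > c * \<gamma> * N g" by simp
    have "\<exists>u0\<in>V. g u0 \<noteq> 0"
    proof (rule ccontr)
      assume "\<not> (\<exists>u0\<in>V. g u0 \<noteq> 0)"
      then have "Q g = 0" "N g = 0" unfolding Q_def N_def by auto
      then show False using gt by simp
    qed
    then obtain u0 where u0: "u0 \<in> V" "g u0 \<noteq> 0" by blast
    have Ng: "N g > 0"
    proof -
      have "p u0 * (g u0)^2 > 0" using ppos[OF u0(1)] u0(2) by simp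
      also have "p u0 * (g u0)^2 \<le> N g" unfolding N_def using finV u0(1)
        by (intro member_le_sum) (auto intro!: mult_nonneg_nonneg dest: ppos)
      finally show ?thesis .
    qed
    obtain h R where Mh: "M h = 0" and Nh: "N h = 1"
      and eig: "\<forall>u\<in>V. (\<Sum>v\<in>V. K u v * h v) = c * R * p u * h u"
      and allg: "\<forall>g. M g = 0 \<longrightarrow> Q g \<le> c * R * N g"
      using spectral[OF finV ppos Ksym _ rows, of g u0] c1 Mg u0 unfolding M_def N_def Q_def by auto
    have "c * \<gamma> * N g < c * R * N g" using gt allg Mg by force
    then have gR: "\<gamma> < R" using c1 Ng by simp
    let ?LW = "link_weight X d w s"
    have rowW: "(\<Sum>v'\<in>V. ?LW u v') = p u / W s" if "u \<in> V" for u
    proof -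
      have "(\<Sum>v'\<in>V. ?LW u v') = (\<Sum>v'\<in>V. K u v' / W s)"
        using that unfolding V_def K_def by (intro sum.cong refl lw_eq[OF cs]) auto
      also have "\<dots> = p u / W s" using rows[OF that] c1 by (simp add: sum_divide_distrib[symmetric])
      finally show ?thesis .
    qed
    have na: "norm_adj V ?LW u v = K u v / p u" if "u \<in> V" "v \<in> V" for u v
      unfolding norm_adj_def rowW[OF that(1)] using that Ws ppos[OF that(1)]
      unfolding V_def K_def by (simp add: lw_eq[OF cs])
    have e1: "is_eigenpair V (norm_adj V ?LW) 1 (\<lambda>_. 1)"
      unfolding is_eigenpair_def
    proof (intro conjI ballI)
      show "\<exists>v\<in>V. (1::real) \<noteq> 0" using u0 by auto
    next
      fix u assume u: "u \<in> V"
      have "(\<Sum>v\<in>V. norm_adj V ?LW u v * 1) = (\<Sum>v\<in>V. K u v) / p u"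
        using u na by (simp add: sum_divide_distrib)
      then show "(\<Sum>v\<in>V. norm_adj V ?LW u v * 1) = 1 * 1" using rows[OF u] c1 ppos[OF u] by simp
    qed
    have hnz: "\<exists>v\<in>V. h v \<noteq> 0"
    proof (rule ccontr)
      assume "\<not> (\<exists>v\<in>V. h v \<noteq> 0)"
      then have "N h = 0" unfolding N_def by auto
      then show False using Nh by simp
    qed
    have e2: "is_eigenpair V (norm_adj V ?LW) R h"
      unfolding is_eigenpair_def
    proof (intro conjI ballI)
      show "\<exists>v\<in>V. h v \<noteq> 0" by (rule hnz)
    next
      fix u assume u: "u \<in> V"
      have "(\<Sum>v\<in>V. norm_adj V ?LW u v * h v) = (\<Sum>v\<in>V. K u v * h v) / p u"
        using u na by (simp add: sum_divide_distrib)
      then show "(\<Sum>v\<in>V. norm_adj V ?LW u v * h v) = R * h u" using eig u c1 ppos[OF u] by simp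
    qed
    obtain a b where ab: "a \<noteq> 0 \<or> b \<noteq> 0" and lin: "\<forall>v\<in>V. a * 1 + b * h v = 0"
      using ose e1 e2 g1 gR unfolding one_sided_expander_def V_def by blast
    show False
    proof (cases "b = 0")
      case True
      then have "a = 0" using lin u0 by auto
      then show False using ab True by simp
    next
      case False
      then have hc: "\<forall>v\<in>V. h v = - a / b" using lin by (auto simp: field_simps)
      have "M h = (\<Sum>u\<in>V. (- a / b) * p u)" unfolding M_def using hc by (intro sum.cong refl) simp
      also have "\<dots> = (- a / b) * (\<Sum>u\<in>V. p u)" by (rule sum_distrib_left[symmetric])
      finally have "M h = (- a / b) * (\<Sum>u\<in>V. p u)" .
      then have z: "- a / b = 0" using Mh Psum by simp
      then have "\<forall>v\<in>V. h v = 0" using hc by simp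
      then have "N h = 0" unfolding N_def by simp
      then show False using Nh by simp
    qed
  qed
  have full: "Q g \<le> c * (\<gamma> * N g + (1 - \<gamma>) * (M g)^2 / (\<Sum>u\<in>V. p u))" for g
    unfolding Q_def N_def M_def
    by (rule perp_to_full[OF finV Ksym rows Psum]) (use perp in \<open>auto simp: Q_def N_def M_def\<close>)
  show ?thesis
    unfolding LE_iff_V[OF fs] using full unfolding Q_def N_def M_def V_def K_def p_def c_def by blast
qed

end


lemma A_pos:
  fixes lam :: real
  assumes "lam < 1" "k \<le> d - 1" "2 \<le> d"
  shows "real (d - 1) - real k * lam > 0"
proof (cases "lam \<ge> 0")
  case True
  have "real k * lam \<le> real k * 1" using assms(1) True by (intro mult_left_mono) auto
  moreover have "real k * lam < real (d - 1) \<or> k = 0"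
  proof (cases "k = 0")
    case False
    then have "real k * lam < real k * 1" using assms(1) by (intro mult_strict_left_mono) auto
    then show ?thesis using assms(2) by (simp add: of_nat_diff)
  qed simp
  ultimately show ?thesis using assms(3) by (auto simp: of_nat_diff)
next
  case False
  then have "real k * lam \<le> 0" by (simp add: mult_nonneg_nonpos)
  then show ?thesis using assms(3) by (simp add: of_nat_diff)
qed

context cplx
begin

lemma LE_all:
  assumes TD: "is_TD X d w lam" and lam1: "lam < 1"
  shows "n + 2 \<le> d \<Longrightarrow> s \<in> X \<Longrightarrow> card s + 2 + n = d \<Longrightarrow> LE s (lam / (real (d - 1) - real n * lam))"
proof (induction n arbitrary: s)
  case 0
  have ose: "one_sided_expander (link_vertices X s) (link_weight X d w s) (lam / real (d - 1))"
    using TD 0 unfolding is_TD_def by auto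
  have "lam / real (d - 1) < 1"
  proof -
    have "real (d - 1) \<ge> 1" using 0 by (simp add: of_nat_diff)
    then show ?thesis using lam1 by (simp add: divide_less_eq)
  qed
  then show ?case using base[OF 0(2) _ _ ose] 0 by simp
next
  case (Suc n)
  have d2: "2 \<le> d" using Suc.prems by simp
  define A where "A = real (d - 1) - real n * lam"
  define \<mu> where "\<mu> = lam / A"
  have Apos: "A > 0" unfolding A_def using A_pos[OF lam1 _ d2, of n] Suc.prems by simp
  have A1pos: "A - lam > 0"
  proof -
    have "real (d - 1) - real (Suc n) * lam > 0" using A_pos[OF lam1 _ d2, of "Suc n"] Suc.prems by simp
    then show ?thesis unfolding A_def by (simp add: algebra_simps)
  qed
  have mu1: "\<mu> < 1" unfolding \<mu>_def using Apos A1pos by (simp add: divide_less_eq)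
  have LEu: "LE (insert u s) \<mu>" if u: "u \<in> link_vertices X s" for u
  proof -
    have us: "u \<notin> s" "insert u s \<in> X" using u unfolding link_vertices_def by auto
    have fs: "finite s" using fin_face Suc.prems(2) by simp
    have "card (insert u s) + 2 + n = d" using us fs Suc.prems(3) by simp
    then show ?thesis unfolding \<mu>_def A_def using Suc.IH[of "insert u s"] us Suc.prems(1) by simp
  qed
  have conn: "graph_connected (link_vertices X s) (link_edge X s)"
    using TD Suc.prems unfolding is_TD_def by auto
  have "LE s (\<mu> / (1 - \<mu>))" by (rule trickle[OF Suc.prems(2) _ mu1 LEu conn]) (use Suc.prems in simp)
  moreover have "\<mu> / (1 - \<mu>) = lam / (real (d - 1) - real (Suc n) * lam)"
  proof -
    have "1 - \<mu> = (A - lam) / A" using Apos unfolding \<mu>_def by (simp add: field_simps)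
    then have "\<mu> / (1 - \<mu>) = lam / (A - lam)" using Apos A1pos unfolding \<mu>_def by simp
    moreover have "A - lam = real (d - 1) - real (Suc n) * lam" unfolding A_def by (simp add: algebra_simps)
    ultimately show ?thesis by simp
  qed
  ultimately show ?case by simp
qed

definition Pm :: "real \<Rightarrow> real" where "Pm lam = (if lam \<ge> 0 then 1 - lam else 1)"

lemma poincare_core:
  assumes TD: "is_TD X d w lam" and lam1: "lam < 1" and k1: "1 \<le> k" and kd: "k \<le> d"
    and h: "mean0 k h"
  shows "Tq (k - 1) h \<le> real (d - (k - 1)) * (real k - Pm lam) * Sq k h"
proof -
  define Aq where "Aq m = real (d - 1) - real m * lam" for m
  define Q where "Q j = (if j = 0 then 0 else if lam \<ge> 0 \<and> 2 \<le> d then Aq (d - 1) / Aq (d - j) else 1)" for j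
  have Aqpos: "Aq m > 0" if "m \<le> d - 1" "2 \<le> d" for m unfolding Aq_def using A_pos[OF lam1 that] .
  have Q1: "Q (Suc 0) \<le> 1" unfolding Q_def using Aqpos[of "d - 1"] by auto
  have Qb: "Q j \<le> real j" for j
  proof (cases "j = 0")
    case False
    have "Q j \<le> 1"
    proof (cases "lam \<ge> 0 \<and> 2 \<le> d")
      case True
      have p: "Aq (d - j) > 0" using Aqpos[of "d - j"] True False by simp
      have "Aq (d - 1) \<le> Aq (d - j)" unfolding Aq_def using True False
        by (intro diff_left_mono mult_right_mono) auto
      then show ?thesis unfolding Q_def using True False p by (simp add: divide_le_eq)
    next
      case F: False then show ?thesis unfolding Q_def using False by auto
    qed
    then show ?thesis using False by (simp add: order_trans[of _ 1])
  qed (simp add: Q_def)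
  have step: "\<exists>\<gamma>. \<gamma> \<le> 1 \<and> (\<forall>s\<in>faces X i. LE s \<gamma>) \<and> Q (Suc (Suc i)) \<le> (1 - \<gamma>) * Q (Suc i)"
    if i: "Suc (Suc i) \<le> k" for i
  proof -
    have d2: "2 \<le> d" using i kd by simp
    define n where "n = d - 2 - i"
    define \<gamma> where "\<gamma> = lam / Aq n"
    have An: "Aq n > 0" using Aqpos[of n] d2 unfolding n_def by simp
    have An1: "Aq (Suc n) > 0" using Aqpos[of "Suc n"] d2 i kd unfolding n_def by simp
    have g1: "\<gamma> < 1" unfolding \<gamma>_def using An An1 unfolding Aq_def by (simp add: divide_less_eq algebra_simps)
    have LEs: "\<forall>s\<in>faces X i. LE s \<gamma>"
    proof
      fix s assume "s \<in> faces X i"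
      then have "s \<in> X" "card s = i" unfolding faces_def by auto
      then show "LE s \<gamma>" unfolding \<gamma>_def Aq_def
        using LE_all[OF TD lam1, of n s] i kd unfolding n_def by simp
    qed
    have "Q (Suc (Suc i)) \<le> (1 - \<gamma>) * Q (Suc i)"
    proof (cases "lam \<ge> 0")
      case True
      have e1: "d - Suc (Suc i) = n" unfolding n_def by simp
      have e2: "d - Suc i = Suc n" unfolding n_def using i kd by simp
      have A1: "Aq (d - 1) > 0" using Aqpos[of "d - 1"] d2 by simp
      have "1 - \<gamma> = Aq (Suc n) / Aq n" unfolding \<gamma>_def using An unfolding Aq_def by (simp add: field_simps)
      then have "(1 - \<gamma>) * Q (Suc i) = Aq (d - 1) / Aq n"
        unfolding Q_def e2 using True d2 An1 An by simp
      then show ?thesis unfolding Q_def e1 using True d2 by simp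
    next
      case False
      then have "\<gamma> \<le> 0" unfolding \<gamma>_def using An by (simp add: divide_nonpos_pos)
      then show ?thesis unfolding Q_def using False by simp
    qed
    then show ?thesis using g1 LEs by (intro exI[of _ \<gamma>]) auto
  qed
  obtain i where ki: "k = Suc i" using k1 by (cases k) auto
  have core: "Tq i h \<le> real (d - i) * (real (Suc i) - Q (Suc i)) * Sq (Suc i) h"
    by (rule l2g[OF kd Q1 Qb step]) (use ki h in auto)
  have QP: "Q k \<ge> Pm lam"
  proof (cases "lam \<ge> 0 \<and> 2 \<le> d")
    case True
    have p: "Aq (d - k) > 0" using Aqpos[of "d - k"] True k1 by simp
    have "Aq (d - k) \<le> real (d - 1)" unfolding Aq_def using True by simp
    moreover have "Aq (d - 1) = real (d - 1) * (1 - lam)" unfolding Aq_def by (simp add: algebra_simps)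
    moreover have "1 - lam > 0" using lam1 by simp
    ultimately have "(1 - lam) * Aq (d - k) \<le> Aq (d - 1)" by (simp add: mult_left_mono mult.commute)
    then have "1 - lam \<le> Aq (d - 1) / Aq (d - k)" using p by (simp add: le_divide_eq)
    then show ?thesis unfolding Q_def Pm_def using True k1 by simp
  next
    case False
    then show ?thesis unfolding Q_def Pm_def using k1 lam1 by auto
  qed
  have "real (d - i) * (real (Suc i) - Q (Suc i)) * Sq (Suc i) h \<le> real (d - i) * (real (Suc i) - Pm lam) * Sq (Suc i) h"
    using QP ki Sq_nonneg by (intro mult_right_mono mult_left_mono) auto
  then show ?thesis using core ki by simp
qed

end


lemma pairs_id:
  fixes p f :: "'b \<Rightarrow> real"
  assumes "finite A"
  shows "(\<Sum>a\<in>A. \<Sum>b\<in>A. p a * p b * (max (f a - f b) 0)^2) = (\<Sum>a\<in>A. p a) * (\<Sum>a\<in>A. p a * (f a)^2) - (\<Sum>a\<in>A. p a * f a)^2"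
proof -
  define S1 where "S1 = (\<Sum>a\<in>A. \<Sum>b\<in>A. p a * p b * (max (f a - f b) 0)^2)"
  have S2: "S1 = (\<Sum>a\<in>A. \<Sum>b\<in>A. p a * p b * (max (f b - f a) 0)^2)"
    unfolding S1_def by (subst sum.swap) (simp add: mult.commute)
  have mx: "\<And>t::real. (max t 0)^2 + (max (-t) 0)^2 = t^2" by (simp add: max_def power2_eq_square)
  have "(\<Sum>a\<in>A. \<Sum>b\<in>A. p a * p b * ((max (f a - f b) 0)^2 + (max (f b - f a) 0)^2))
      = S1 + (\<Sum>a\<in>A. \<Sum>b\<in>A. p a * p b * (max (f b - f a) 0)^2)"
    unfolding S1_def by (simp add: sum.distrib distrib_left)
  then have "2 * S1 = (\<Sum>a\<in>A. \<Sum>b\<in>A. p a * p b * ((max (f a - f b) 0)^2 + (max (f b - f a) 0)^2))"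
    using S2 by simp
  also have "\<dots> = (\<Sum>a\<in>A. \<Sum>b\<in>A. p a * p b * (f a - f b)^2)"
    using mx[of "f a - f b" for a b] by (simp add: mx)
  also have "\<dots> = (\<Sum>a\<in>A. \<Sum>b\<in>A. p b * (p a * (f a)^2) + p a * (p b * (f b)^2) - 2 * ((p a * f a) * (p b * f b)))"
    by (intro sum.cong refl) (simp add: power2_eq_square algebra_simps)
  also have "\<dots> = (\<Sum>a\<in>A. \<Sum>b\<in>A. p b * (p a * (f a)^2)) + (\<Sum>a\<in>A. \<Sum>b\<in>A. p a * (p b * (f b)^2))
      - 2 * (\<Sum>a\<in>A. \<Sum>b\<in>A. (p a * f a) * (p b * f b))"
    by (simp add: sum.distrib sum_subtractf sum_distrib_left)
  also have "(\<Sum>a\<in>A. \<Sum>b\<in>A. p b * (p a * (f a)^2)) = (\<Sum>a\<in>A. p a) * (\<Sum>a\<in>A. p a * (f a)^2)"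
    by (simp add: sum_distrib_right[symmetric] sum_distrib_left[symmetric] mult.commute)
  also have "(\<Sum>a\<in>A. \<Sum>b\<in>A. p a * (p b * (f b)^2)) = (\<Sum>a\<in>A. p a) * (\<Sum>a\<in>A. p a * (f a)^2)"
    by (simp add: sum_distrib_right[symmetric] sum_distrib_left[symmetric])
  also have "(\<Sum>a\<in>A. \<Sum>b\<in>A. (p a * f a) * (p b * f b)) = (\<Sum>a\<in>A. p a * f a)^2"
    by (simp add: power2_eq_square sum_product)
  finally show ?thesis unfolding S1_def by simp
qed


lemma exp_le_inv: fixes u :: real assumes "u < 1" shows "exp u \<le> 1 / (1 - u)"
proof -
  have "1 - u \<le> exp (- u)" using exp_ge_add_one_self[of "-u"] by simp
  then have "(1 - u) * exp u \<le> exp (-u) * exp u" by (intro mult_right_mono) auto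
  then have "(1 - u) * exp u \<le> 1" by (simp add: exp_minus field_simps)
  then show ?thesis using assms by (simp add: le_divide_eq mult.commute)
qed

lemma expm1_bound:
  fixes u u0 :: real
  assumes u0: "0 \<le> u" "u \<le> u0" "u0 < 1"
  shows "exp u - 1 \<le> u * (1 + u0 / 2 + u0^2 / (6 * (1 - u0)))"
proof -
  obtain t where t: "\<bar>t\<bar> \<le> \<bar>u\<bar>" and e: "exp u = (\<Sum>m<3. u ^ m / fact m) + exp t / fact 3 * u ^ 3"
    using Maclaurin_exp_le[of u 3] by blast
  have s: "(\<Sum>m<3. u ^ m / fact m) = 1 + u + u^2 / 2"
    by (simp add: numeral_3_eq_3 fact_numeral eval_nat_numeral)
  have f3: "fact 3 = (6::real)" by (simp add: fact_numeral)
  have "exp t \<le> exp u0" using t u0 by simp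
  also have "\<dots> \<le> 1 / (1 - u0)" using exp_le_inv u0 by simp
  finally have et: "exp t \<le> 1 / (1 - u0)" .
  have "exp u - 1 = u + u^2 / 2 + exp t / 6 * u^3" using e s f3 by simp
  also have "\<dots> \<le> u + u^2 / 2 + (1 / (1 - u0)) / 6 * u^3"
    using et u0 by (intro add_left_mono mult_right_mono divide_right_mono) auto
  also have "\<dots> = u * (1 + u / 2 + u^2 / (6 * (1 - u0)))" using u0 by (simp add: field_simps power2_eq_square power3_eq_cube)
  also have "\<dots> \<le> u * (1 + u0 / 2 + u0^2 / (6 * (1 - u0)))"
    using u0 by (intro mult_left_mono add_mono divide_right_mono power_mono) auto
  finally show ?thesis .
qed

lemma exp_diff_up:
  fixes a b :: real
  shows "(max (exp a - exp b) 0)^2 \<le> (max (a - b) 0)^2 * exp (2 * a)"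
proof (cases "b \<le> a")
  case True
  have "exp a * exp (b - a) = exp b" by (simp add: exp_diff)
  then have "exp a - exp b = exp a * (1 - exp (b - a))" by (simp add: right_diff_distrib)
  also have "\<dots> \<le> exp a * (a - b)"
  proof -
    have "1 - exp (b - a) \<le> a - b" using exp_ge_add_one_self[of "b - a"] by linarith
    then show ?thesis by (intro mult_left_mono) auto
  qed
  finally have le: "exp a - exp b \<le> exp a * (a - b)" .
  have nn: "0 \<le> exp a - exp b" using True by simp
  have "(max (exp a - exp b) 0)^2 = (exp a - exp b)^2" using nn by simp
  also have "\<dots> \<le> (exp a * (a - b))^2" using le nn by (intro power_mono) auto
  also have "\<dots> = (max (a - b) 0)^2 * exp (2 * a)"
  proof -
    have e2: "exp (2 * a) = (exp a)^2" by (rule exp_double)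
    show ?thesis using True unfolding e2 by (simp add: power_mult_distrib mult.commute)
  qed
  finally show ?thesis .
next
  case False
  then have "exp a - exp b \<le> 0" by simp
  then show ?thesis by simp
qed

context cplx
begin

definition Lam where
  "Lam k g = (\<Sum>x\<in>faces X k. pi_k X d w k x * (\<Sum>v\<in>x. \<Sum>z\<in>Vx. link_pi X d w (x - {v}) 1 {z} * (max (g x - g (insert z (x - {v}))) 0)^2))"

lemma pi_k_eq: "pi_k X d w k x = (if card x = k then W x / real (d choose k) else 0)"
  unfolding pi_k_def W_def TF_def by simp

lemma link1_eq: "link_pi X d w y 1 {z} = (if z \<notin> y then W (insert z y) / (W y * real (d - card y)) else 0)"
  unfolding link_pi_def W_def[symmetric] TF_def[symmetric] by auto

lemma link1_sum: assumes "y \<in> X" "card y < d"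
  shows "(\<Sum>z\<in>Vx. link_pi X d w y 1 {z} * F z) = (\<Sum>z\<in>Vx - y. W (insert z y) * F z) / (W y * real (d - card y))"
proof -
  have "(\<Sum>z\<in>Vx. link_pi X d w y 1 {z} * F z) = (\<Sum>z\<in>Vx - y. W (insert z y) / (W y * real (d - card y)) * F z)"
    unfolding link1_eq using finite_Vx by (subst sum.mono_neutral_right[of Vx "Vx - y"]) auto
  then show ?thesis by (simp add: sum_divide_distrib)
qed

lemma Lam_closed:
  assumes kd: "Suc j \<le> d"
  shows "Lam (Suc j) g = (real (Suc j) * Sq (Suc j) g - Tq j g / real (d - j)) / real (d choose Suc j)"
proof -
  define C where "C = real (d choose Suc j)"
  define G where "G y z0 = (\<Sum>z\<in>Vx. link_pi X d w y 1 {z} * (max (g (insert z0 y) - g (insert z y)) 0)^2) / C" for y z0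
  have "Lam (Suc j) g = (\<Sum>x\<in>faces X (Suc j). W x * (\<Sum>v\<in>x. G (x - {v}) v))"
    unfolding Lam_def
  proof (rule sum.cong[OF refl])
    fix x assume x: "x \<in> faces X (Suc j)"
    have "\<And>v. v \<in> x \<Longrightarrow> insert v (x - {v}) = x" by auto
    then have "(\<Sum>v\<in>x. G (x - {v}) v) = (\<Sum>v\<in>x. \<Sum>z\<in>Vx. link_pi X d w (x - {v}) 1 {z} * (max (g x - g (insert z (x - {v}))) 0)^2) / C"
      unfolding G_def by (simp add: sum_divide_distrib)
    then show "pi_k X d w (Suc j) x * (\<Sum>v\<in>x. \<Sum>z\<in>Vx. link_pi X d w (x - {v}) 1 {z} * (max (g x - g (insert z (x - {v}))) 0)^2)
       = W x * (\<Sum>v\<in>x. G (x - {v}) v)"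
      using x unfolding pi_k_eq C_def faces_def by simp
  qed
  also have "\<dots> = (\<Sum>y\<in>faces X j. \<Sum>z0\<in>Vx - y. W (insert z0 y) * G y z0)" by (rule RIW2[symmetric])
  also have "\<dots> = (\<Sum>y\<in>faces X j. ((\<Sum>z\<in>Vx - y. W (insert z y) * (g (insert z y))^2)
        - (\<Sum>z\<in>Vx - y. W (insert z y) * g (insert z y))^2 / (real (d - j) * W y)) / C)"
  proof (rule sum.cong[OF refl])
    fix y assume y: "y \<in> faces X j"
    have yX: "y \<in> X" and cy: "card y = j" using y unfolding faces_def by auto
    have Wy: "W y > 0" using W_pos[OF yX] .
    have dj: "real (d - j) > 0" using kd by simp
    define a where "a z = W (insert z y)" for z
    define b where "b z = g (insert z y)" for z
    have fA: "finite (Vx - y)" using finite_Vx by simp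
    have Sa: "(\<Sum>z\<in>Vx - y. a z) = real (d - j) * W y" unfolding a_def using W_ext[of y] cy by simp
    have "(\<Sum>z0\<in>Vx - y. W (insert z0 y) * G y z0)
        = (\<Sum>z0\<in>Vx - y. \<Sum>z\<in>Vx - y. a z0 * a z * (max (b z0 - b z) 0)^2) / (W y * (real (d - j) * C))"
      unfolding G_def link1_sum[OF yX, unfolded cy, OF kd[unfolded Suc_le_eq]] a_def b_def
      by (simp add: sum_divide_distrib sum_distrib_left mult.assoc)
    also have "\<dots> = ((\<Sum>z\<in>Vx - y. a z) * (\<Sum>z\<in>Vx - y. a z * (b z)^2) - (\<Sum>z\<in>Vx - y. a z * b z)^2) / (W y * (real (d - j) * C))"
      using pairs_id[OF fA, of a b] by simp
    also have "\<dots> = ((\<Sum>z\<in>Vx - y. a z * (b z)^2) - (\<Sum>z\<in>Vx - y. a z * b z)^2 / (real (d - j) * W y)) / C"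
      unfolding Sa using Wy dj by (simp add: field_simps)
    finally show "(\<Sum>z0\<in>Vx - y. W (insert z0 y) * G y z0) = ((\<Sum>z\<in>Vx - y. W (insert z y) * (g (insert z y))^2)
        - (\<Sum>z\<in>Vx - y. W (insert z y) * g (insert z y))^2 / (real (d - j) * W y)) / C"
      unfolding a_def b_def .
  qed
  also have "\<dots> = ((\<Sum>y\<in>faces X j. \<Sum>z\<in>Vx - y. W (insert z y) * (g (insert z y))^2)
        - (\<Sum>y\<in>faces X j. (\<Sum>z\<in>Vx - y. W (insert z y) * g (insert z y))^2 / (real (d - j) * W y))) / C"
    by (simp add: sum_divide_distrib[symmetric] sum_subtractf)
  also have "(\<Sum>y\<in>faces X j. \<Sum>z\<in>Vx - y. W (insert z y) * (g (insert z y))^2) = real (Suc j) * Sq (Suc j) g"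
    unfolding Sq_def by (rule RIW)
  also have "(\<Sum>y\<in>faces X j. (\<Sum>z\<in>Vx - y. W (insert z y) * g (insert z y))^2 / (real (d - j) * W y)) = Tq j g / real (d - j)"
    unfolding Tq_def by (simp add: sum_divide_distrib mult.commute)
  finally show ?thesis unfolding C_def .
qed

lemma pi_nonneg: "pi_k X d w k x \<ge> 0"
  unfolding pi_k_eq using W_nonneg by simp

lemma pi_pos: "x \<in> faces X k \<Longrightarrow> k \<le> d \<Longrightarrow> pi_k X d w k x > 0"
  unfolding pi_k_eq faces_def using W_pos by auto

lemma pi_sum: "k \<le> d \<Longrightarrow> (\<Sum>x\<in>faces X k. pi_k X d w k x) = 1"
proof -
  assume kd: "k \<le> d"
  have "(\<Sum>x\<in>faces X k. pi_k X d w k x) = (\<Sum>x\<in>faces X k. W x) / real (d choose k)"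
    unfolding pi_k_eq by (simp add: faces_def sum_divide_distrib)
  then show ?thesis using W_level_sum[OF kd] kd by simp
qed

lemma Lam_shift: "Lam k (\<lambda>x. g x + c) = Lam k g"
  unfolding Lam_def by simp

lemma poincare:
  assumes TD: "is_TD X d w lam" and lam1: "lam < 1" and k1: "1 \<le> k" and kd: "k \<le> d"
  shows "Pm lam * (\<Sum>x\<in>faces X k. pi_k X d w k x * (g x - (\<Sum>y\<in>faces X k. pi_k X d w k y * g y))^2) \<le> Lam k g"
proof -
  define E where "E = (\<Sum>y\<in>faces X k. pi_k X d w k y * g y)"
  define g' where "g' x = g x + (- E)" for x
  define C where "C = real (d choose k)"
  have C0: "C > 0" unfolding C_def using kd by simp
  obtain j where kj: "k = Suc j" using k1 by (cases k) auto
  have piW: "x \<in> faces X k \<Longrightarrow> pi_k X d w k x = W x / C" for x unfolding pi_k_eq C_def faces_def by simp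
  have m0: "mean0 k g'"
  proof -
    have "(\<Sum>y\<in>faces X k. W y * g' y) = C * (\<Sum>y\<in>faces X k. pi_k X d w k y * g' y)"
      using C0 by (simp add: sum_distrib_left piW)
    also have "(\<Sum>y\<in>faces X k. pi_k X d w k y * g' y) = E - E * (\<Sum>y\<in>faces X k. pi_k X d w k y)"
    proof -
      have "(\<Sum>y\<in>faces X k. pi_k X d w k y * g' y) = (\<Sum>y\<in>faces X k. pi_k X d w k y * g y) + (\<Sum>y\<in>faces X k. pi_k X d w k y * (- E))"
        unfolding g'_def by (simp add: right_diff_distrib sum_subtractf sum_negf)
      also have "(\<Sum>y\<in>faces X k. pi_k X d w k y * (- E)) = (\<Sum>y\<in>faces X k. pi_k X d w k y) * (- E)"
        by (rule sum_distrib_right[symmetric])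
      finally show ?thesis unfolding E_def by simp
    qed
    also have "\<dots> = 0" using pi_sum[OF kd] by simp
    finally show ?thesis unfolding mean0_def by simp
  qed
  have core: "Tq j g' \<le> real (d - j) * (real k - Pm lam) * Sq k g'"
    using poincare_core[OF TD lam1 k1 kd m0] kj by simp
  have dj: "real (d - j) > 0" using kd kj by simp
  have "Lam k g = Lam k g'" unfolding g'_def Lam_shift ..
  also have "\<dots> = (real k * Sq k g' - Tq j g' / real (d - j)) / C"
    unfolding C_def kj by (rule Lam_closed) (use kd kj in simp)
  also have "\<dots> \<ge> (real k * Sq k g' - (real k - Pm lam) * Sq k g') / C"
  proof -
    have "Tq j g' / real (d - j) \<le> (real k - Pm lam) * Sq k g'" using core dj by (simp add: divide_le_eq mult.commute mult.left_commute)
    then show ?thesis using C0 by (intro divide_right_mono) auto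
  qed
  finally have "Lam k g \<ge> Pm lam * (Sq k g' / C)" by (simp add: algebra_simps)
  moreover have "Sq k g' / C = (\<Sum>x\<in>faces X k. pi_k X d w k x * (g x - E)^2)"
    unfolding Sq_def g'_def by (simp add: sum_divide_distrib piW)
  ultimately show ?thesis unfolding E_def by simp
qed

lemma card_minus_lt:
  assumes x: "x \<in> faces X k" and kd: "k \<le> d" and v: "v \<in> x"
  shows "card (x - {v}) < d"
proof -
  have xX: "x \<in> X" and cx: "card x = k" using x unfolding faces_def by auto
  have fx: "finite x" using fin_face xX .
  have "card x > 0" using fx v card_gt_0_iff by blast
  then show ?thesis using fx v cx kd by (simp add: card_Diff_singleton)
qed

lemma link_self_pos:
  assumes x: "x \<in> faces X k" and kd: "k \<le> d" and v: "v \<in> x"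
  shows "link_pi X d w (x - {v}) 1 {v} > 0"
proof -
  have xX: "x \<in> X" and cx: "card x = k" using x unfolding faces_def by auto
  have fx: "finite x" using fin_face xX .
  have yX: "x - {v} \<in> X" using down xX by blast
  have cy: "card (x - {v}) < d" by (rule card_minus_lt[OF x kd v])
  have "insert v (x - {v}) = x" using v by auto
  then show ?thesis unfolding link1_eq using W_pos[OF xX] W_pos[OF yX] cy by simp
qed

lemma lip_apply:
  assumes lip: "lipschitz X d w k f \<nu>" and x: "x \<in> faces X k" and kd: "k \<le> d"
    and zp: "\<forall>v\<in>x. link_pi X d w (x - {v}) 1 {z v} > 0"
  shows "(\<Sum>v\<in>x. (max (f x - f (insert (z v) (x - {v}))) 0)^2) \<le> \<nu>"
proof -
  have "\<forall>s\<in>faces X k. pi_k X d w k s > 0 \<longrightarrow> (\<forall>z :: 'a \<Rightarrow> 'a. (\<forall>v\<in>s. link_pi X d w (s - {v}) 1 {z v} > 0) \<longrightarrow>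
          (\<Sum>v\<in>s. (max (f s - f (insert (z v) (s - {v}))) 0)\<^sup>2) \<le> \<nu>)"
    using lip unfolding lipschitz_def .
  then have "pi_k X d w k x > 0 \<longrightarrow> (\<forall>z :: 'a \<Rightarrow> 'a. (\<forall>v\<in>x. link_pi X d w (x - {v}) 1 {z v} > 0) \<longrightarrow>
          (\<Sum>v\<in>x. (max (f x - f (insert (z v) (x - {v}))) 0)\<^sup>2) \<le> \<nu>)"
    using x by (rule bspec)
  then have "\<forall>z :: 'a \<Rightarrow> 'a. (\<forall>v\<in>x. link_pi X d w (x - {v}) 1 {z v} > 0) \<longrightarrow>
          (\<Sum>v\<in>x. (max (f x - f (insert (z v) (x - {v}))) 0)\<^sup>2) \<le> \<nu>"
    using pi_pos[OF x kd] by (rule mp)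
  then have "(\<forall>v\<in>x. link_pi X d w (x - {v}) 1 {z v} > 0) \<longrightarrow>
          (\<Sum>v\<in>x. (max (f x - f (insert (z v) (x - {v}))) 0)\<^sup>2) \<le> \<nu>" by (rule spec)
  then show ?thesis using zp by (rule mp)
qed

lemma lip_single:
  assumes lip: "lipschitz X d w k f \<nu>" and kd: "k \<le> d" and x: "x \<in> faces X k" and v: "v \<in> x"
    and z: "link_pi X d w (x - {v}) 1 {z} > 0"
  shows "(max (f x - f (insert z (x - {v}))) 0)^2 \<le> \<nu>"
proof -
  define zz where "zz u = (if u = v then z else u)" for u
  have fx: "finite x" using x fin_face unfolding faces_def by auto
  have pos: "\<forall>u\<in>x. link_pi X d w (x - {u}) 1 {zz u} > 0"
    using z link_self_pos[OF x kd] unfolding zz_def by auto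
  have "(\<Sum>u\<in>x. (max (f x - f (insert (zz u) (x - {u}))) 0)^2) \<le> \<nu>"
    by (rule lip_apply[OF lip x kd pos])
  moreover have "(\<Sum>u\<in>x. (max (f x - f (insert (zz u) (x - {u}))) 0)^2) = (max (f x - f (insert z (x - {v}))) 0)^2"
  proof -
    have "\<And>u. u \<in> x \<Longrightarrow> u \<noteq> v \<Longrightarrow> insert (zz u) (x - {u}) = x" unfolding zz_def by auto
    then have "(\<Sum>u\<in>x. (max (f x - f (insert (zz u) (x - {u}))) 0)^2) = (\<Sum>u\<in>x. if u = v then (max (f x - f (insert z (x - {v}))) 0)^2 else 0)"
      by (intro sum.cong refl) (auto simp: zz_def)
    then show ?thesis using v fx by simp
  qed
  ultimately show ?thesis by simp
qed

lemma link1_total: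
  assumes x: "x \<in> faces X k" and kd: "k \<le> d" and v: "v \<in> x"
  shows "(\<Sum>z\<in>Vx. link_pi X d w (x - {v}) 1 {z}) = 1"
proof -
  have xX: "x \<in> X" and cx: "card x = k" using x unfolding faces_def by auto
  have fx: "finite x" using fin_face xX .
  have yX: "x - {v} \<in> X" using down xX by blast
  have cy: "card (x - {v}) < d" by (rule card_minus_lt[OF x kd v])
  have "(\<Sum>z\<in>Vx. link_pi X d w (x - {v}) 1 {z} * 1) = (\<Sum>z\<in>Vx - (x - {v}). W (insert z (x - {v})) * 1) / (W (x - {v}) * real (d - card (x - {v})))"
    by (rule link1_sum[OF yX cy])
  also have "\<dots> = 1" using W_ext[of "x - {v}"] W_pos[OF yX] cy by simp
  finally show ?thesis by simp
qed

lemma lip_sum: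
  assumes lip: "lipschitz X d w k f \<nu>" and kd: "k \<le> d" and x: "x \<in> faces X k"
  shows "(\<Sum>v\<in>x. \<Sum>z\<in>Vx. link_pi X d w (x - {v}) 1 {z} * (max (f x - f (insert z (x - {v}))) 0)^2) \<le> \<nu>"
proof -
  define \<phi> where "\<phi> v z = (max (f x - f (insert z (x - {v}))) 0)^2" for v z
  define Z where "Z v = {z\<in>Vx. link_pi X d w (x - {v}) 1 {z} > 0}" for v
  have xX: "x \<in> X" using x unfolding faces_def by auto
  have vZ: "v \<in> Z v" if "v \<in> x" for v unfolding Z_def using link_self_pos[OF x kd that] face_sub_Vx[OF xX] that by auto
  have fZ: "finite (Z v)" for v unfolding Z_def using finite_Vx by simp
  define zc where "zc v = (SOME z. z \<in> Z v \<and> (\<forall>z'\<in>Z v. \<phi> v z' \<le> \<phi> v z))" for v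
  have zc: "zc v \<in> Z v \<and> (\<forall>z'\<in>Z v. \<phi> v z' \<le> \<phi> v (zc v))" if "v \<in> x" for v
  proof -
    have ne: "\<phi> v ` Z v \<noteq> {}" using vZ[OF that] by auto
    obtain z where z: "z \<in> Z v" "\<phi> v z = Max (\<phi> v ` Z v)" using Max_in[OF finite_imageI[OF fZ] ne] by auto
    have "\<forall>z'\<in>Z v. \<phi> v z' \<le> \<phi> v z" using z fZ by simp
    then have "\<exists>z. z \<in> Z v \<and> (\<forall>z'\<in>Z v. \<phi> v z' \<le> \<phi> v z)" using z by blast
    then show ?thesis unfolding zc_def by (rule someI_ex)
  qed
  have each: "(\<Sum>z\<in>Vx. link_pi X d w (x - {v}) 1 {z} * \<phi> v z) \<le> \<phi> v (zc v)" if v: "v \<in> x" for v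
  proof -
    have "(\<Sum>z\<in>Vx. link_pi X d w (x - {v}) 1 {z} * \<phi> v z) \<le> (\<Sum>z\<in>Vx. link_pi X d w (x - {v}) 1 {z} * \<phi> v (zc v))"
    proof (rule sum_mono)
      fix z assume z: "z \<in> Vx"
      have L0: "link_pi X d w (x - {v}) 1 {z} \<ge> 0" unfolding link1_eq using W_nonneg by simp
      show "link_pi X d w (x - {v}) 1 {z} * \<phi> v z \<le> link_pi X d w (x - {v}) 1 {z} * \<phi> v (zc v)"
      proof (cases "link_pi X d w (x - {v}) 1 {z} > 0")
        case True
        then have "z \<in> Z v" unfolding Z_def using z by simp
        then show ?thesis using zc[OF v] L0 by (intro mult_left_mono) auto
      next
        case False
        then have "link_pi X d w (x - {v}) 1 {z} = 0" using L0 by simp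
        then show ?thesis by simp
      qed
    qed
    also have "\<dots> = \<phi> v (zc v)" using link1_total[OF x kd v] by (simp add: sum_distrib_right[symmetric])
    finally show ?thesis .
  qed
  have "(\<Sum>v\<in>x. \<phi> v (zc v)) \<le> \<nu>"
  proof -
    have "\<forall>v\<in>x. link_pi X d w (x - {v}) 1 {zc v} > 0" using zc unfolding Z_def by auto
    then show ?thesis unfolding \<phi>_def by (rule lip_apply[OF lip x kd])
  qed
  moreover have "(\<Sum>v\<in>x. \<Sum>z\<in>Vx. link_pi X d w (x - {v}) 1 {z} * \<phi> v z) \<le> (\<Sum>v\<in>x. \<phi> v (zc v))"
    by (rule sum_mono) (rule each)
  ultimately show ?thesis unfolding \<phi>_def by linarith
qed

end


lemma neg_ln_bound: fixes x :: real assumes "0 \<le> x" "x < 1" shows "- ln (1 - x) \<le> x / (1 - x)"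
proof -
  have "ln (1 / (1 - x)) \<le> 1 / (1 - x) - 1" using assms by (intro ln_le_minus_one) auto
  moreover have "ln (1 / (1 - x)) = - ln (1 - x)" using assms by (simp add: ln_div)
  moreover have "1 / (1 - x) - 1 = x / (1 - x)" using assms by (simp add: field_simps)
  ultimately show ?thesis by simp
qed

lemma exp_quad: fixes y :: real shows "exp y - 1 - y \<le> y^2 * exp \<bar>y\<bar>"
proof -
  obtain t where t: "\<bar>t\<bar> \<le> \<bar>y\<bar>" and e: "exp y = (\<Sum>m<2. y ^ m / fact m) + exp t / fact 2 * y ^ 2"
    using Maclaurin_exp_le[of y 2] by blast
  have "(\<Sum>m<2. y ^ m / fact m) = 1 + y" by (simp add: numeral_2_eq_2)
  then have "exp y - 1 - y = exp t / 2 * y^2" using e by simp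
  also have "\<dots> \<le> exp \<bar>y\<bar> / 2 * y^2" using t by (intro mult_right_mono divide_right_mono) auto
  also have "\<dots> \<le> y^2 * exp \<bar>y\<bar>" by simp
  finally show ?thesis .
qed

lemma exp_033: "exp (33/100 :: real) \<le> 7/5"
proof -
  have "exp (33/100 :: real) = exp (of_nat 16 * (33/1600))" by simp
  also have "\<dots> = exp (33/1600) ^ 16" by (rule exp_of_nat_mult)
  also have "\<dots> \<le> (1600/1567) ^ 16"
  proof (rule power_mono)
    show "exp (33/1600::real) \<le> 1600/1567" using exp_le_inv[of "33/1600"] by simp
  qed simp
  also have "\<dots> \<le> (7/5 :: real)" by (simp add: power_divide)
  finally show ?thesis .
qed

lemma tail_generic:
  fixes S :: "'b set" and p f :: "'b \<Rightarrow> real" and \<theta>0 b t :: real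
  assumes fin: "finite S" and pnn: "\<And>x. x \<in> S \<Longrightarrow> p x \<ge> 0" and psum: "(\<Sum>x\<in>S. p x) = 1"
    and mean: "(\<Sum>x\<in>S. p x * f x) = 0" and th0: "\<theta>0 > 0" and b0: "b \<ge> 0" and ab: "b * \<theta>0^2 \<le> 3/10"
    and rec: "\<And>\<theta>. 0 < \<theta> \<Longrightarrow> \<theta> \<le> \<theta>0 \<Longrightarrow> (\<Sum>x\<in>S. p x * exp (\<theta> * f x)) - (\<Sum>x\<in>S. p x * exp (\<theta> / 2 * f x))^2
        \<le> b * \<theta>^2 * (\<Sum>x\<in>S. p x * exp (\<theta> * f x))"
  shows "(\<Sum>x\<in>{x\<in>S. f x \<ge> t}. p x) \<le> 2 * exp (- (\<theta>0 * t))"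
proof -
  define F where "F \<theta> = (\<Sum>x\<in>S. p x * exp (\<theta> * f x))" for \<theta>
  obtain x0 where x0: "x0 \<in> S" "p x0 > 0"
  proof -
    have "\<exists>x\<in>S. p x \<noteq> 0" using psum by (metis sum.neutral zero_neq_one)
    then show ?thesis using that pnn by (metis less_eq_real_def)
  qed
  have Fpos: "F \<theta> > 0" for \<theta>
  proof -
    have "p x0 * exp (\<theta> * f x0) \<le> F \<theta>" unfolding F_def using fin x0 pnn
      by (intro member_le_sum) auto
    moreover have "p x0 * exp (\<theta> * f x0) > 0" using x0 by simp
    ultimately show ?thesis by simp
  qed
  have step: "ln (F \<theta>) \<le> 2 * ln (F (\<theta> / 2)) + (- ln (1 - b * \<theta>^2))" if th: "0 < \<theta>" "\<theta> \<le> \<theta>0" for \<theta>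
  proof -
    have "\<theta>^2 \<le> \<theta>0^2" using th by (intro power_mono) auto
    then have "b * \<theta>^2 \<le> b * \<theta>0^2" using b0 by (intro mult_left_mono) auto
    then have q: "1 - b * \<theta>^2 \<ge> 7/10" using ab by simp
    have "F \<theta> * (1 - b * \<theta>^2) \<le> (F (\<theta>/2))^2" using rec[OF th] unfolding F_def by (simp add: algebra_simps)
    moreover have p1: "F \<theta> * (1 - b * \<theta>^2) > 0" using Fpos[of \<theta>] q by (intro mult_pos_pos) auto
    moreover have p2: "(F (\<theta>/2))^2 > 0" using Fpos[of "\<theta>/2"] by simp
    ultimately have "ln (F \<theta> * (1 - b * \<theta>^2)) \<le> ln ((F (\<theta>/2))^2)" by simp
    moreover have "ln (F \<theta> * (1 - b * \<theta>^2)) = ln (F \<theta>) + ln (1 - b * \<theta>^2)"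
      using Fpos[of \<theta>] q by (simp add: ln_mult)
    moreover have "ln ((F (\<theta>/2))^2) = 2 * ln (F (\<theta>/2))" using Fpos by (simp add: ln_realpow)
    ultimately show ?thesis by simp
  qed
  define T where "T j = 2^j * (- ln (1 - b * (\<theta>0 / 2^j)^2))" for j :: nat
  have iter: "ln (F \<theta>0) \<le> 2^n * ln (F (\<theta>0 / 2^n)) + (\<Sum>j<n. T j)" for n
  proof (induction n)
    case 0 then show ?case by simp
  next
    case (Suc n)
    have th: "0 < \<theta>0 / 2^n" "\<theta>0 / 2^n \<le> \<theta>0" using th0 by (auto simp: divide_le_eq)
    have "ln (F (\<theta>0 / 2^n)) \<le> 2 * ln (F (\<theta>0 / 2^n / 2)) + (- ln (1 - b * (\<theta>0 / 2^n)^2))"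
      by (rule step[OF th])
    then have "2^n * ln (F (\<theta>0 / 2^n)) \<le> 2^n * (2 * ln (F (\<theta>0 / 2^n / 2)) + (- ln (1 - b * (\<theta>0 / 2^n)^2)))"
      by (intro mult_left_mono) auto
    also have "\<dots> = 2^Suc n * ln (F (\<theta>0 / 2^Suc n)) + T n" unfolding T_def by (simp add: algebra_simps)
    finally show ?case using Suc.IH by simp
  qed
  define a where "a = b * \<theta>0^2"
  have a0: "0 \<le> a" "a \<le> 3/10" unfolding a_def using b0 ab by auto
  have Ta: "T j = 2^j * (- ln (1 - a / 4^j))" for j
  proof -
    have "((2::real)^j)^2 = 4^j" by (simp add: power2_eq_square power_mult_distrib[symmetric])
    then have "(\<theta>0 / 2^j)^2 = \<theta>0^2 / 4^j" by (simp add: power_divide)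
    then show ?thesis unfolding T_def a_def by simp
  qed
  have T0: "T 0 \<le> ln (10/7)"
  proof -
    have "ln (7/10) \<le> ln (1 - a)" using a0 by simp
    moreover have "ln (10/7) = - ln (7/10::real)" by (simp add: ln_div)
    ultimately show ?thesis using Ta[of 0] by simp
  qed
  have Tj: "T j \<le> (12/37) / 2^j" if "j \<ge> 1" for j
  proof -
    have p4: "(4::real)^j \<ge> 4" using that by (metis power_one_right power_increasing numeral_le_one_iff semiring_norm(69) le_numeral_extra(1) one_le_numeral)
    have x0: "0 \<le> a / 4^j" using a0 by simp
    have x1: "a / 4^j \<le> 3/40"
    proof -
      have "a / 4^j \<le> a / 4" using a0 p4 by (intro divide_left_mono) auto
      moreover have "a / 4 \<le> 3/40" using a0 by simp
      ultimately show ?thesis by linarith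
    qed
    have "- ln (1 - a / 4^j) \<le> (a / 4^j) / (1 - a / 4^j)" by (rule neg_ln_bound[OF x0]) (use x1 in linarith)
    also have "\<dots> \<le> (a / 4^j) / (37/40)" using x0 x1 by (intro divide_left_mono) auto
    finally have "- ln (1 - a / 4^j) \<le> (40/37) * (a / 4^j)" by simp
    then have "T j \<le> 2^j * ((40/37) * (a / 4^j))" unfolding Ta by (intro mult_left_mono) auto
    also have "\<dots> = (40/37) * a / 2^j"
      by (simp add: power_mult_distrib[symmetric] field_simps flip: power_mult_distrib)
    also have "\<dots> \<le> (40/37) * (3/10) / 2^j" using a0 by (intro divide_right_mono) auto
    finally show ?thesis by simp
  qed
  have sumT: "(\<Sum>j<n. T j) \<le> ln (10/7) + (12/37) * (1 - 1 / 2^(n - 1))" if "n \<ge> 1" for n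
    using that
  proof (induction n)
    case 0 then show ?case by simp
  next
    case (Suc n)
    show ?case
    proof (cases "n = 0")
      case True then show ?thesis using T0 by simp
    next
      case False
      then have "(\<Sum>j<n. T j) \<le> ln (10/7) + (12/37) * (1 - 1 / 2^(n - 1))" using Suc.IH by simp
      moreover have "T n \<le> (12/37) / 2^n" using Tj False by simp
      moreover have "(12/37::real) * (1 - 1 / 2^(n - 1)) + (12/37) / 2^n = (12/37) * (1 - 1 / 2^n)"
      proof -
        have "(2::real)^n = 2 * 2^(n-1)" using False by (metis power_eq_if)
        then show ?thesis by (simp add: field_simps)
      qed
      moreover have "(\<Sum>j<Suc n. T j) = (\<Sum>j<n. T j) + T n" by simp
      moreover have "Suc n - 1 = n" by simp
      ultimately show ?thesis by (simp only:)
    qed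
  qed
  have sumT': "(\<Sum>j<n. T j) \<le> ln (10/7) + 12/37" for n
  proof (cases "n = 0")
    case True
    have "ln (10/7::real) \<ge> 0" by simp
    then show ?thesis using True by simp
  next
    case False
    then have "(\<Sum>j<n. T j) \<le> ln (10/7) + (12/37) * (1 - 1 / 2^(n - 1))" using sumT by simp
    moreover have "(12/37) * (1 - 1 / 2^(n - 1)) \<le> (12::real)/37" by simp
    ultimately show ?thesis by linarith
  qed
  define Mf where "Mf = (\<Sum>x\<in>S. \<bar>f x\<bar>)"
  have Mf: "\<bar>f x\<bar> \<le> Mf" if "x \<in> S" for x unfolding Mf_def using fin that by (intro member_le_sum) auto
  define B where "B = Mf^2 * exp (\<theta>0 * Mf)"
  have B0: "B \<ge> 0" unfolding B_def by simp
  have lnF_small: "ln (F s) \<le> s^2 * B" if s: "0 < s" "s \<le> \<theta>0" for s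
  proof -
    have "F s - 1 = (\<Sum>x\<in>S. p x * (exp (s * f x) - 1 - s * f x))"
      unfolding F_def using psum mean
      by (simp add: right_diff_distrib sum_subtractf sum_distrib_left[symmetric] mult.left_commute)
    also have "\<dots> \<le> (\<Sum>x\<in>S. p x * (s^2 * B))"
    proof (rule sum_mono)
      fix x assume x: "x \<in> S"
      have "exp (s * f x) - 1 - s * f x \<le> (s * f x)^2 * exp \<bar>s * f x\<bar>" by (rule exp_quad)
      also have "\<dots> \<le> (s^2 * Mf^2) * exp (\<theta>0 * Mf)"
      proof (intro mult_mono)
        have "\<bar>f x\<bar>^2 \<le> Mf^2" using Mf[OF x] by (intro power_mono) auto
        then show "(s * f x)^2 \<le> s^2 * Mf^2" by (simp add: power_mult_distrib mult_left_mono)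
        have "\<bar>s * f x\<bar> \<le> \<theta>0 * Mf" using s Mf[OF x] by (simp add: abs_mult mult_mono)
        then show "exp \<bar>s * f x\<bar> \<le> exp (\<theta>0 * Mf)" by simp
      qed auto
      finally show "p x * (exp (s * f x) - 1 - s * f x) \<le> p x * (s^2 * B)"
        unfolding B_def using pnn[OF x] by (intro mult_left_mono) (auto simp: mult.assoc)
    qed
    also have "\<dots> = s^2 * B" using psum by (simp add: sum_distrib_right[symmetric])
    finally have "F s - 1 \<le> s^2 * B" .
    moreover have "ln (F s) \<le> F s - 1" using Fpos by (intro ln_le_minus_one)
    ultimately show ?thesis by simp
  qed
  obtain n :: nat where n: "200 * \<theta>0^2 * B < 2^n" using real_arch_pow[of 2 "200 * \<theta>0^2 * B"] by auto
  have "2^n * ln (F (\<theta>0 / 2^n)) \<le> 2^n * ((\<theta>0 / 2^n)^2 * B)"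
    using lnF_small[of "\<theta>0 / 2^n"] th0 by (intro mult_left_mono) (auto simp: divide_le_eq)
  also have "\<dots> = \<theta>0^2 * B / 2^n" by (simp add: power_divide power2_eq_square field_simps)
  also have "\<dots> \<le> 1/200" using n by (simp add: divide_le_eq)
  finally have small: "2^n * ln (F (\<theta>0 / 2^n)) \<le> 1/200" .
  have lnF: "ln (F \<theta>0) \<le> ln (10/7) + 33/100"
    using iter[of n] small sumT'[of n] by simp
  have "F \<theta>0 = exp (ln (F \<theta>0))" using Fpos by simp
  also have "\<dots> \<le> exp (ln (10/7) + 33/100)" using lnF by simp
  also have "\<dots> = (10/7) * exp (33/100)" by (simp add: exp_add)
  also have "\<dots> \<le> (10/7) * (7/5)" using exp_033 by simp
  finally have F2: "F \<theta>0 \<le> 2" by simp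
  have "(\<Sum>x\<in>{x\<in>S. f x \<ge> t}. p x) \<le> (\<Sum>x\<in>{x\<in>S. f x \<ge> t}. p x * exp (\<theta>0 * (f x - t)))"
  proof (rule sum_mono)
    fix x assume "x \<in> {x\<in>S. f x \<ge> t}"
    then have "exp (\<theta>0 * (f x - t)) \<ge> 1" "p x \<ge> 0" using th0 pnn by auto
    then show "p x \<le> p x * exp (\<theta>0 * (f x - t))" by (metis mult_left_mono mult.right_neutral)
  qed
  also have "\<dots> \<le> (\<Sum>x\<in>S. p x * exp (\<theta>0 * (f x - t)))"
    using fin pnn by (intro sum_mono2) auto
  also have "\<dots> = F \<theta>0 * exp (- (\<theta>0 * t))"
  proof -
    have "\<And>x. p x * exp (\<theta>0 * (f x - t)) = p x * exp (\<theta>0 * f x) * exp (- (\<theta>0 * t))"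
      by (simp add: right_diff_distrib mult.assoc flip: exp_add)
    then have "(\<Sum>x\<in>S. p x * exp (\<theta>0 * (f x - t))) = (\<Sum>x\<in>S. p x * exp (\<theta>0 * f x) * exp (- (\<theta>0 * t)))"
      by (rule sum.cong[OF refl])
    then show ?thesis unfolding F_def by (simp only: sum_distrib_right)
  qed
  also have "\<dots> \<le> 2 * exp (- (\<theta>0 * t))" using F2 by (intro mult_right_mono) auto
  finally show ?thesis .
qed



definition rr :: "real \<Rightarrow> real" where "rr s = 1 + (s/2)/2 + (s/2)^2/(6*(1 - s/2))"

lemma rr_mono: assumes "0 \<le> s" "s \<le> s1" "s1 < 2" shows "rr s \<le> rr s1"
proof -
  have a: "(s/2)^2 \<le> (s1/2)^2" using assms by (intro power_mono) auto
  have b: "0 < 6*(1 - s1/2)" "6*(1 - s1/2) \<le> 6*(1 - s/2)" using assms by auto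
  have "(s/2)^2/(6*(1 - s/2)) \<le> (s1/2)^2/(6*(1 - s1/2))"
    by (rule frac_le) (use a b in auto)
  then show ?thesis unfolding rr_def using assms by simp
qed

lemma rr_ge1: assumes "0 \<le> s" "s < 2" shows "rr s \<ge> 1"
  unfolding rr_def using assms by (simp add: add_nonneg_nonneg)

lemma sq_le_bound: fixes s b :: real assumes "0 \<le> s" "s^2 \<le> b^2" "0 \<le> b" shows "s \<le> b"
  using assms by (meson power2_le_imp_le)

lemma exp_m1: "exp (-1::real) \<ge> 9/25"
proof -
  have "exp (-1::real) = exp (of_nat 32 * (-1/32))" by simp
  also have "\<dots> = exp (-1/32) ^ 32" by (rule exp_of_nat_mult)
  also have "\<dots> \<ge> (31/32) ^ 32"
  proof (rule power_mono)
    show "(31/32::real) \<le> exp (-1/32)" using exp_ge_add_one_self[of "-1/32::real"] by simp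
  qed simp
  finally have "exp (-1::real) \<ge> (31/32)^32" .
  moreover have "(31/32::real)^32 \<ge> 9/25" by (simp add: power_divide)
  ultimately show ?thesis by simp
qed

lemma N1: fixes lam :: real assumes "lam < 1"
  shows "(if lam \<ge> 0 then 1 - lam else 1) * (1 + exp (lam / (1 - lam))) \<ge> 1"
proof (cases "lam \<ge> 0")
  case True
  have "1 + lam / (1 - lam) \<le> exp (lam / (1 - lam))" by (rule exp_ge_add_one_self)
  then have "(1 - lam) * (2 + lam / (1 - lam)) \<le> (1 - lam) * (1 + exp (lam / (1 - lam)))"
    using assms by (intro mult_left_mono) auto
  moreover have "(1 - lam) * (2 + lam / (1 - lam)) = 2 - lam" using assms by (simp add: field_simps)
  ultimately show ?thesis using True assms by simp
next
  case False
  then show ?thesis by (simp add: add_increasing)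
qed

lemma N2: fixes lam :: real assumes lam1: "lam < 1"
  defines "c \<equiv> 1 + exp (lam / (1 - lam))"
  shows "(rr (1 / sqrt c))^2 / ((if lam \<ge> 0 then 1 - lam else 1) * c) \<le> 6/5"
proof -
  define s where "s = 1 / sqrt c"
  have c1: "c > 1" unfolding c_def by simp
  have s0: "s > 0" unfolding s_def using c1 by simp
  have s2: "s^2 = 1 / c" unfolding s_def using c1 by (simp add: power_divide)
  have r1: "rr s \<ge> 1" if "s < 2" using rr_ge1[OF _ that] s0 by simp
  show ?thesis
  proof (cases "lam \<ge> 0")
    case True
    define x where "x = lam / (1 - lam)"
    have x0: "x \<ge> 0" unfolding x_def using True lam1 by simp
    have e1: "1 / (1 - lam) = 1 + x" unfolding x_def using lam1 by (simp add: field_simps)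
    have "1 + x \<le> exp x" by (rule exp_ge_add_one_self)
    then have inv: "1 / (1 - lam) \<le> c - 1" unfolding e1 c_def x_def by simp
    have c2: "c \<ge> 2" using inv lam1 True by (smt (verit) le_divide_eq_1_pos)
    have "1 / c \<le> 1 / 2" using c2 by (intro divide_left_mono) auto
    then have "s^2 \<le> (71/100)^2" using s2 by (simp add: power2_eq_square)
    moreover have "0 \<le> s" using s0 by simp
    ultimately have s71: "s \<le> 71/100" using sq_le_bound[of s "71/100"] by simp
    have "(rr s)^2 / ((1 - lam) * c) = (rr s)^2 * (1 / (1 - lam)) * (1 / c)" by simp
    also have "\<dots> \<le> (rr s)^2 * (c - 1) * (1 / c)"
      using inv c1 by (intro mult_right_mono mult_left_mono) auto
    also have "\<dots> = (rr s)^2 * (1 - s^2)"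
    proof -
      have "(c - 1) * (1 / c) = 1 - 1 / c" using c1 by (simp add: field_simps)
      then show ?thesis unfolding s2 by (simp only: mult.assoc)
    qed
    finally have main: "(rr s)^2 / ((1 - lam) * c) \<le> (rr s)^2 * (1 - s^2)" .
    have rs: "0 \<le> rr s" using r1 s71 by simp
    have "(rr s)^2 * (1 - s^2) \<le> 6/5"
    proof (cases "s \<le> 3/10")
      case True
      have "rr s \<le> rr (3/10)" using rr_mono[of s "3/10"] s0 True by simp
      then have "(rr s)^2 \<le> (rr (3/10))^2" using rs by (intro power_mono) auto
      moreover have "(rr (3/10))^2 \<le> 6/5" unfolding rr_def by (simp add: power2_eq_square)
      moreover have "(rr s)^2 * (1 - s^2) \<le> (rr s)^2" using s0 by (simp add: mult_left_le)
      ultimately show ?thesis by linarith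
    next
      case F1: False
      show ?thesis
      proof (cases "s \<le> 1/2")
        case True
        have "rr s \<le> rr (1/2)" using rr_mono[of s "1/2"] s0 True by simp
        then have "(rr s)^2 \<le> (rr (1/2))^2" using rs by (intro power_mono) auto
        moreover have "1 - s^2 \<le> 91/100"
        proof -
          have "(3/10)^2 \<le> s^2" using F1 by (intro power_mono) auto
          then show ?thesis by (simp add: power_divide)
        qed
        moreover have "(rr (1/2))^2 * (91/100) \<le> 6/5" unfolding rr_def by (simp add: power2_eq_square)
        moreover have "1 - s^2 \<ge> 0" using s2 c1 by simp
        ultimately have "(rr s)^2 * (1 - s^2) \<le> (rr (1/2))^2 * (91/100)" by (intro mult_mono) auto
        then show ?thesis using \<open>(rr (1/2))^2 * (91/100) \<le> 6/5\<close> by linarith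
      next
        case False
        have "rr s \<le> rr (71/100)" using rr_mono[of s "71/100"] s0 s71 by simp
        then have "(rr s)^2 \<le> (rr (71/100))^2" using rs by (intro power_mono) auto
        moreover have "1 - s^2 \<le> 3/4"
        proof -
          have "(1/2)^2 \<le> s^2" using False by (intro power_mono) auto
          then show ?thesis by (simp add: power_divide)
        qed
        moreover have "(rr (71/100))^2 * (3/4) \<le> 6/5" unfolding rr_def by (simp add: power2_eq_square)
        moreover have "1 - s^2 \<ge> 0" using s2 c1 by simp
        ultimately have "(rr s)^2 * (1 - s^2) \<le> (rr (71/100))^2 * (3/4)" by (intro mult_mono) auto
        then show ?thesis using \<open>(rr (71/100))^2 * (3/4) \<le> 6/5\<close> by linarith
      qed
    qed
    then have "(rr s)^2 / ((1 - lam) * c) \<le> 6/5" using main by linarith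
    then show ?thesis using True unfolding s_def by simp
  next
    case False
    have xm: "lam / (1 - lam) \<ge> -1" using lam1 by (simp add: field_simps)
    have "exp (lam / (1 - lam)) \<ge> exp (-1)" using xm by simp
    then have c34: "c \<ge> 34/25" unfolding c_def using exp_m1 by linarith
    have c34': "1 / c \<le> 25/34" using c34 by (simp add: divide_le_eq)
    have "s^2 \<le> (429/500)^2" using s2 c34' by (simp add: power_divide)
    moreover have "0 \<le> s" using s0 by simp
    ultimately have s429: "s \<le> 429/500" using sq_le_bound[of s "429/500"] by simp
    have rs: "0 \<le> rr s" using r1 s429 by simp
    have "rr s \<le> rr (429/500)" using rr_mono[of s "429/500"] s0 s429 by simp
    then have "(rr s)^2 \<le> (rr (429/500))^2" using rs by (intro power_mono) auto
    moreover have "s^2 \<le> 25/34" using s2 c34' by simp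
    moreover have "(rr (429/500))^2 * (25/34) \<le> 6/5" unfolding rr_def by (simp add: power2_eq_square)
    moreover have "(rr s)^2 * s^2 \<le> (rr (429/500))^2 * (25/34)"
      using \<open>(rr s)^2 \<le> (rr (429/500))^2\<close> \<open>s^2 \<le> 25/34\<close> by (intro mult_mono) auto
    ultimately have "(rr s)^2 * s^2 \<le> 6/5" by linarith
    moreover have "(rr s)^2 / (1 * c) = (rr s)^2 * s^2" unfolding s2 by simp
    ultimately have "(rr s)^2 / (1 * c) \<le> 6/5" by simp
    then show ?thesis using False unfolding s_def by simp
  qed
qed


lemma var_id:
  fixes p g :: "'b \<Rightarrow> real"
  assumes "finite S" "(\<Sum>x\<in>S. p x) = 1"
  shows "(\<Sum>x\<in>S. p x * (g x - (\<Sum>y\<in>S. p y * g y))^2) = (\<Sum>x\<in>S. p x * (g x)^2) - (\<Sum>x\<in>S. p x * g x)^2"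
proof -
  define E where "E = (\<Sum>y\<in>S. p y * g y)"
  have "(\<Sum>x\<in>S. p x * (g x - E)^2) = (\<Sum>x\<in>S. p x * (g x)^2 - 2 * E * (p x * g x) + E^2 * p x)"
    by (intro sum.cong refl) (simp add: power2_eq_square algebra_simps)
  also have "\<dots> = (\<Sum>x\<in>S. p x * (g x)^2) - 2 * E * E + E^2 * 1"
    unfolding E_def using assms by (simp add: sum.distrib sum_subtractf sum_distrib_left[symmetric])
  finally show ?thesis unfolding E_def by (simp add: power2_eq_square)
qed

lemma max_scale: fixes c t :: real assumes "c > 0" shows "max (c * t) 0 = c * max t 0"
  using assms by (simp add: max_def mult_le_0_iff)

context cplx
begin

lemma lip_shift: "lipschitz X d w k f \<nu> \<Longrightarrow> lipschitz X d w k (\<lambda>x. f x + c) \<nu>"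
  unfolding lipschitz_def by simp

lemma mom_upper:
  assumes TD: "is_TD X d w lam" and lam1: "lam < 1" and k1: "1 \<le> k" and kd: "k \<le> d"
    and lip: "lipschitz X d w k f \<nu>" and th: "\<theta> > 0"
  shows "Pm lam * ((\<Sum>x\<in>faces X k. pi_k X d w k x * exp (\<theta> * f x)) - (\<Sum>x\<in>faces X k. pi_k X d w k x * exp (\<theta> / 2 * f x))^2)
     \<le> \<theta>^2 * \<nu> / 4 * (\<Sum>x\<in>faces X k. pi_k X d w k x * exp (\<theta> * f x))"
proof -
  define g where "g x = exp (\<theta> / 2 * f x)" for x
  have g2: "(g x)^2 = exp (\<theta> * f x)" for x
  proof -
    have "(g x)^2 = exp (2 * (\<theta> / 2 * f x))" unfolding g_def by (rule exp_double[symmetric])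
    then show ?thesis by simp
  qed
  have V: "(\<Sum>x\<in>faces X k. pi_k X d w k x * (g x - (\<Sum>y\<in>faces X k. pi_k X d w k y * g y))^2)
      = (\<Sum>x\<in>faces X k. pi_k X d w k x * exp (\<theta> * f x)) - (\<Sum>x\<in>faces X k. pi_k X d w k x * exp (\<theta> / 2 * f x))^2"
    unfolding var_id[OF finite_faces pi_sum[OF kd]] g2 unfolding g_def ..
  have P: "Pm lam * (\<Sum>x\<in>faces X k. pi_k X d w k x * (g x - (\<Sum>y\<in>faces X k. pi_k X d w k y * g y))^2) \<le> Lam k g"
    by (rule poincare[OF TD lam1 k1 kd])
  have "Lam k g \<le> (\<Sum>x\<in>faces X k. pi_k X d w k x * (\<theta>^2 / 4 * exp (\<theta> * f x) * \<nu>))"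
    unfolding Lam_def
  proof (rule sum_mono, rule mult_left_mono[OF _ pi_nonneg])
    fix x assume x: "x \<in> faces X k"
    have pw: "(max (g x - g (insert z (x - {v}))) 0)^2 \<le> \<theta>^2 / 4 * exp (\<theta> * f x) * (max (f x - f (insert z (x - {v}))) 0)^2" for v z
    proof -
      have "(max (g x - g (insert z (x - {v}))) 0)^2 \<le> (max (\<theta> / 2 * f x - \<theta> / 2 * f (insert z (x - {v}))) 0)^2 * exp (2 * (\<theta> / 2 * f x))"
        unfolding g_def by (rule exp_diff_up)
      also have "max (\<theta> / 2 * f x - \<theta> / 2 * f (insert z (x - {v}))) 0 = \<theta> / 2 * max (f x - f (insert z (x - {v}))) 0"
      proof -
        have "\<theta> / 2 * f x - \<theta> / 2 * f (insert z (x - {v})) = \<theta> / 2 * (f x - f (insert z (x - {v})))"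
          by (simp add: right_diff_distrib)
        then show ?thesis by (simp only:) (rule max_scale, use th in simp)
      qed
      finally show ?thesis by (simp add: power_mult_distrib power_divide mult.commute mult.left_commute)
    qed
    have "(\<Sum>v\<in>x. \<Sum>z\<in>Vx. link_pi X d w (x - {v}) 1 {z} * (max (g x - g (insert z (x - {v}))) 0)^2)
        \<le> (\<Sum>v\<in>x. \<Sum>z\<in>Vx. link_pi X d w (x - {v}) 1 {z} * (\<theta>^2 / 4 * exp (\<theta> * f x) * (max (f x - f (insert z (x - {v}))) 0)^2))"
    proof (intro sum_mono mult_left_mono pw)
      fix v z show "0 \<le> link_pi X d w (x - {v}) 1 {z}" unfolding link1_eq using W_nonneg by simp
    qed
    also have "\<dots> = \<theta>^2 / 4 * exp (\<theta> * f x) * (\<Sum>v\<in>x. \<Sum>z\<in>Vx. link_pi X d w (x - {v}) 1 {z} * (max (f x - f (insert z (x - {v}))) 0)^2)"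
      by (simp add: sum_distrib_left mult.commute mult.left_commute)
    also have "\<dots> \<le> \<theta>^2 / 4 * exp (\<theta> * f x) * \<nu>"
      using lip_sum[OF lip kd x] by (intro mult_left_mono) auto
    finally show "(\<Sum>v\<in>x. \<Sum>z\<in>Vx. link_pi X d w (x - {v}) 1 {z} * (max (g x - g (insert z (x - {v}))) 0)^2) \<le> \<theta>^2 / 4 * exp (\<theta> * f x) * \<nu>" .
  qed
  also have "\<dots> = \<theta>^2 * \<nu> / 4 * (\<Sum>x\<in>faces X k. pi_k X d w k x * exp (\<theta> * f x))"
    by (simp add: sum_distrib_left mult.commute mult.left_commute)
  finally show ?thesis using P V by simp
qed

lemma mom_lower:
  assumes TD: "is_TD X d w lam" and lam1: "lam < 1" and k1: "1 \<le> k" and kd: "k \<le> d"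
    and lip: "lipschitz X d w k f \<nu>" and th: "\<eta> > 0" and nu: "\<nu> \<ge> 0"
    and u01: "u0 < 1" and hu: "\<eta> * sqrt \<nu> / 2 \<le> u0"
  defines "r0 \<equiv> 1 + u0 / 2 + u0^2 / (6 * (1 - u0))"
  shows "Pm lam * ((\<Sum>x\<in>faces X k. pi_k X d w k x * exp (\<eta> * - f x)) - (\<Sum>x\<in>faces X k. pi_k X d w k x * exp (\<eta> / 2 * - f x))^2)
     \<le> \<eta>^2 * \<nu> * r0^2 / 4 * (\<Sum>x\<in>faces X k. pi_k X d w k x * exp (\<eta> * - f x))"
proof -
  define g where "g x = exp (\<eta> / 2 * - f x)" for x
  define h where "h x = - g x" for x
  have g2: "(g x)^2 = exp (\<eta> * - f x)" for x
  proof -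
    have "(g x)^2 = exp (2 * (\<eta> / 2 * - f x))" unfolding g_def by (rule exp_double[symmetric])
    then show ?thesis by simp
  qed
  have Vh: "(\<Sum>x\<in>faces X k. pi_k X d w k x * (h x - (\<Sum>y\<in>faces X k. pi_k X d w k y * h y))^2)
      = (\<Sum>x\<in>faces X k. pi_k X d w k x * (g x - (\<Sum>y\<in>faces X k. pi_k X d w k y * g y))^2)"
  proof -
    have Eh: "(\<Sum>y\<in>faces X k. pi_k X d w k y * h y) = - (\<Sum>y\<in>faces X k. pi_k X d w k y * g y)"
      unfolding h_def by (simp add: sum_negf)
    have "\<And>x. h x - (\<Sum>y\<in>faces X k. pi_k X d w k y * h y) = - (g x - (\<Sum>y\<in>faces X k. pi_k X d w k y * g y))"
      unfolding Eh unfolding h_def by simp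
    then have "\<And>x. (h x - (\<Sum>y\<in>faces X k. pi_k X d w k y * h y))^2 = (g x - (\<Sum>y\<in>faces X k. pi_k X d w k y * g y))^2"
      by (simp only: power2_minus)
    then show ?thesis by simp
  qed
  have V: "(\<Sum>x\<in>faces X k. pi_k X d w k x * (g x - (\<Sum>y\<in>faces X k. pi_k X d w k y * g y))^2)
      = (\<Sum>x\<in>faces X k. pi_k X d w k x * exp (\<eta> * - f x)) - (\<Sum>x\<in>faces X k. pi_k X d w k x * exp (\<eta> / 2 * - f x))^2"
    unfolding var_id[OF finite_faces pi_sum[OF kd]] g2 unfolding g_def ..
  have P: "Pm lam * (\<Sum>x\<in>faces X k. pi_k X d w k x * (h x - (\<Sum>y\<in>faces X k. pi_k X d w k y * h y))^2) \<le> Lam k h"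
    by (rule poincare[OF TD lam1 k1 kd])
  have "0 \<le> \<eta> * sqrt \<nu> / 2" using th nu by simp
  then have u00: "u0 \<ge> 0" using hu by linarith
  have r0pos: "r0 \<ge> 0" unfolding r0_def using u00 u01
    by (intro add_nonneg_nonneg divide_nonneg_pos) auto
  have "Lam k h \<le> (\<Sum>x\<in>faces X k. pi_k X d w k x * (\<eta>^2 * r0^2 / 4 * exp (\<eta> * - f x) * \<nu>))"
    unfolding Lam_def
  proof (rule sum_mono, rule mult_left_mono[OF _ pi_nonneg])
    fix x assume x: "x \<in> faces X k"
    have pw: "link_pi X d w (x - {v}) 1 {z} * (max (h x - h (insert z (x - {v}))) 0)^2
       \<le> link_pi X d w (x - {v}) 1 {z} * (\<eta>^2 * r0^2 / 4 * exp (\<eta> * - f x) * (max (f x - f (insert z (x - {v}))) 0)^2)"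
      if v: "v \<in> x" for v z
    proof (cases "link_pi X d w (x - {v}) 1 {z} > 0")
      case False
      moreover have "link_pi X d w (x - {v}) 1 {z} \<ge> 0" unfolding link1_eq using W_nonneg by simp
      ultimately have "link_pi X d w (x - {v}) 1 {z} = 0" by linarith
      then show ?thesis by simp
    next
      case Lp: True
      define x' where "x' = insert z (x - {v})"
      have B: "(max (g x' - g x) 0)^2 \<le> \<eta>^2 * r0^2 / 4 * exp (\<eta> * - f x) * (max (f x - f x') 0)^2"
      proof (cases "f x' \<ge> f x")
        case True
        then have "g x' \<le> g x" unfolding g_def using th by (simp add: mult_le_cancel_left_pos)
        then show ?thesis by (simp add: max_def)
      next
        case False
        define \<delta> where "\<delta> = f x - f x'"
        have d0: "\<delta> > 0" unfolding \<delta>_def using False by simp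
        have "(max \<delta> 0)^2 \<le> \<nu>" unfolding \<delta>_def x'_def by (rule lip_single[OF lip kd x v Lp])
        then have "\<delta>^2 \<le> \<nu>" using d0 by simp
        then have dnu: "\<delta> \<le> sqrt \<nu>" using d0 real_le_rsqrt by simp
        define u where "u = \<eta> * \<delta> / 2"
        have u0': "0 \<le> u" "u \<le> u0"
        proof -
          show "0 \<le> u" unfolding u_def using th d0 by simp
          have "\<eta> * \<delta> / 2 \<le> \<eta> * sqrt \<nu> / 2" using dnu th by (intro divide_right_mono mult_left_mono) auto
          then show "u \<le> u0" unfolding u_def using hu by simp
        qed
        have gx': "g x' = g x * exp u" unfolding g_def u_def \<delta>_def by (simp add: algebra_simps flip: exp_add)
        have gpos: "g x > 0" unfolding g_def by simp
        have em: "exp u - 1 \<le> u * r0" unfolding r0_def by (rule expm1_bound[OF u0' u01])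
        have em0: "exp u - 1 \<ge> 0" using u0' by simp
        have "g x' - g x = g x * (exp u - 1)" unfolding gx' by (simp add: algebra_simps)
        moreover have "g x * (exp u - 1) \<le> g x * (u * r0)" using em gpos by (intro mult_left_mono) auto
        moreover have "g x * (exp u - 1) \<ge> 0" using gpos em0 by simp
        ultimately have "(max (g x' - g x) 0)^2 \<le> (g x * (u * r0))^2"
          by (simp add: max_def power_mono)
        also have "\<dots> = \<eta>^2 * r0^2 / 4 * exp (\<eta> * - f x) * \<delta>^2"
          unfolding u_def power_mult_distrib g2[symmetric] by (simp add: power_divide field_simps)
        also have "\<dots> = \<eta>^2 * r0^2 / 4 * exp (\<eta> * - f x) * (max (f x - f x') 0)^2"
          using d0 unfolding \<delta>_def by simp
        finally show ?thesis .
      qed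
      have "max (h x - h x') 0 = max (g x' - g x) 0" unfolding h_def by simp
      then show ?thesis using B Lp unfolding x'_def by (intro mult_left_mono) auto
    qed
    have "(\<Sum>v\<in>x. \<Sum>z\<in>Vx. link_pi X d w (x - {v}) 1 {z} * (max (h x - h (insert z (x - {v}))) 0)^2)
        \<le> (\<Sum>v\<in>x. \<Sum>z\<in>Vx. link_pi X d w (x - {v}) 1 {z} * (\<eta>^2 * r0^2 / 4 * exp (\<eta> * - f x) * (max (f x - f (insert z (x - {v}))) 0)^2))"
      by (intro sum_mono pw)
    also have "\<dots> = \<eta>^2 * r0^2 / 4 * exp (\<eta> * - f x) * (\<Sum>v\<in>x. \<Sum>z\<in>Vx. link_pi X d w (x - {v}) 1 {z} * (max (f x - f (insert z (x - {v}))) 0)^2)"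
      by (simp add: sum_distrib_left mult.commute mult.left_commute)
    also have "\<dots> \<le> \<eta>^2 * r0^2 / 4 * exp (\<eta> * - f x) * \<nu>"
      using lip_sum[OF lip kd x] by (intro mult_left_mono) auto
    finally show "(\<Sum>v\<in>x. \<Sum>z\<in>Vx. link_pi X d w (x - {v}) 1 {z} * (max (h x - h (insert z (x - {v}))) 0)^2) \<le> \<eta>^2 * r0^2 / 4 * exp (\<eta> * - f x) * \<nu>" .
  qed
  also have "\<dots> = \<eta>^2 * \<nu> * r0^2 / 4 * (\<Sum>x\<in>faces X k. pi_k X d w k x * exp (\<eta> * - f x))"
    by (simp add: sum_distrib_left mult.commute mult.left_commute)
  finally show ?thesis using P V Vh by simp
qed

end


theorem mainTheorem2:
  fixes X :: "'a set set" and d k :: nat and w f :: "'a set \<Rightarrow> real"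
    and lam \<nu> t :: real
  assumes "lam < 1"
    and "pure_complex X d"
    and "top_distribution X d w"
    and "is_TD X d w lam"
    and "k \<le> d"
    and "\<nu> > 0"
    and "lipschitz X d w k f \<nu>"
    and "t > 0"
  shows "prob_k X d w k (\<lambda>s. f s - expect_k X d w k f \<ge> t)
           \<le> 2 * exp (- t / sqrt ((1 + exp (lam / (1 - lam))) * \<nu>))
       \<and> prob_k X d w k (\<lambda>s. f s - expect_k X d w k f \<le> - t)
           \<le> 2 * exp (- t / sqrt ((1 + exp (lam / (1 - lam))) * \<nu>))"
proof -
  note lam1 = assms(1) and TD = assms(4) and kd = assms(5) and nu = assms(6) and lip = assms(7) and t0 = assms(8)
  interpret C: cplx X d w by unfold_locales (use assms(2,3) in auto)
  define c where "c = 1 + exp (lam / (1 - lam))"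
  define \<theta>0 where "\<theta>0 = 1 / sqrt (c * \<nu>)"
  define E where "E = expect_k X d w k f"
  have c1: "c > 1" unfolding c_def by simp
  have th0: "\<theta>0 > 0" unfolding \<theta>0_def using c1 nu by simp
  have key: "- t / sqrt ((1 + exp (lam / (1 - lam))) * \<nu>) = - (\<theta>0 * t)"
    unfolding \<theta>0_def c_def[symmetric] by simp
  have Rpos: "0 \<le> 2 * exp (- (\<theta>0 * t))" by simp
  show ?thesis
  proof (cases "k = 0")
    case True
    have f0: "faces X k = {{}}" using True C.faces_0 by simp
    have E0: "E = f {}" unfolding E_def expect_k_def f0 using True by (simp add: C.pi_k_eq C.W_empty)
    have e1: "{s \<in> faces X k. t \<le> f s - E} = {}" unfolding f0 E0 using t0 by auto
    have e2: "{s \<in> faces X k. f s - E \<le> - t} = {}" unfolding f0 E0 using t0 by auto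
    have p1: "prob_k X d w k (\<lambda>s. f s - expect_k X d w k f \<ge> t) = 0"
      unfolding prob_k_def E_def[symmetric] e1 by simp
    have p2: "prob_k X d w k (\<lambda>s. f s - expect_k X d w k f \<le> - t) = 0"
      unfolding prob_k_def E_def[symmetric] e2 by simp
    show ?thesis unfolding key p1 p2 using Rpos by simp
  next
    case False
    then have k1: "1 \<le> k" by simp
    define S where "S = faces X k"
    define p where "p = pi_k X d w k"
    define f0 where "f0 x = f x + (- E)" for x
    have finS: "finite S" unfolding S_def by (rule C.finite_faces)
    have pnn: "\<And>x. x \<in> S \<Longrightarrow> p x \<ge> 0" unfolding p_def by (rule C.pi_nonneg)
    have psum: "(\<Sum>x\<in>S. p x) = 1" unfolding S_def p_def by (rule C.pi_sum[OF kd])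
    have mean0: "(\<Sum>x\<in>S. p x * f0 x) = 0"
    proof -
      have "(\<Sum>x\<in>S. p x * f0 x) = (\<Sum>x\<in>S. p x * f x) - E * (\<Sum>x\<in>S. p x)"
        unfolding f0_def by (simp add: right_diff_distrib sum_subtractf sum_distrib_left mult.commute)
      then show ?thesis using psum unfolding E_def expect_k_def S_def p_def by simp
    qed
    have mean0': "(\<Sum>x\<in>S. p x * (- f0 x)) = 0" using mean0 by (simp add: sum_negf)
    have lip0: "lipschitz X d w k f0 \<nu>" unfolding f0_def by (rule C.lip_shift[OF lip])
    have Pm_eq: "C.Pm lam = (if lam \<ge> 0 then 1 - lam else 1)" unfolding C.Pm_def ..
    have Pmpos: "C.Pm lam > 0" unfolding Pm_eq using lam1 by simp
    have Pmc: "C.Pm lam * c \<ge> 1" unfolding Pm_eq c_def by (rule N1[OF lam1])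
    have th0sq: "\<theta>0^2 = 1 / (c * \<nu>)" unfolding \<theta>0_def using c1 nu by (simp add: power_divide)
    define b1 where "b1 = \<nu> / (4 * C.Pm lam)"
    have b1: "b1 \<ge> 0" unfolding b1_def using nu Pmpos by simp
    have ab1: "b1 * \<theta>0^2 \<le> 3/10"
    proof -
      have "b1 * \<theta>0^2 = 1 / (4 * (C.Pm lam * c))" unfolding b1_def th0sq using nu c1 Pmpos by (simp add: field_simps)
      also have "\<dots> \<le> 1 / 4" using Pmc by (simp add: divide_le_eq)
      finally show ?thesis by simp
    qed
    have rec1: "(\<Sum>x\<in>S. p x * exp (\<theta> * f0 x)) - (\<Sum>x\<in>S. p x * exp (\<theta> / 2 * f0 x))^2
        \<le> b1 * \<theta>^2 * (\<Sum>x\<in>S. p x * exp (\<theta> * f0 x))" if "0 < \<theta>" "\<theta> \<le> \<theta>0" for \<theta>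
    proof -
      have "C.Pm lam * ((\<Sum>x\<in>S. p x * exp (\<theta> * f0 x)) - (\<Sum>x\<in>S. p x * exp (\<theta> / 2 * f0 x))^2)
          \<le> \<theta>^2 * \<nu> / 4 * (\<Sum>x\<in>S. p x * exp (\<theta> * f0 x))"
        unfolding S_def p_def by (rule C.mom_upper[OF TD lam1 k1 kd lip0 that(1)])
      then show ?thesis unfolding b1_def using Pmpos by (simp add: field_simps)
    qed
    have up: "(\<Sum>x\<in>{x\<in>S. f0 x \<ge> t}. p x) \<le> 2 * exp (- (\<theta>0 * t))"
      by (rule tail_generic[OF finS pnn psum mean0 th0 b1 ab1 rec1])
    define s where "s = 1 / sqrt c"
    define u0 where "u0 = s / 2"
    define r0 where "r0 = 1 + u0 / 2 + u0^2 / (6 * (1 - u0))"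
    have r0rr: "r0 = rr s" unfolding r0_def rr_def u0_def ..
    have s1: "s < 1" unfolding s_def using c1 by simp
    have u01: "u0 < 1" unfolding u0_def using s1 by simp
    have hu0: "\<theta>0 * sqrt \<nu> / 2 = u0"
      unfolding \<theta>0_def u0_def s_def using nu c1 by (simp add: real_sqrt_mult)
    define b2 where "b2 = \<nu> * r0^2 / (4 * C.Pm lam)"
    have b2: "b2 \<ge> 0" unfolding b2_def using nu Pmpos by simp
    have ab2: "b2 * \<theta>0^2 \<le> 3/10"
    proof -
      have "b2 * \<theta>0^2 = (rr s)^2 / (C.Pm lam * c) / 4" unfolding b2_def th0sq r0rr using nu c1 Pmpos by (simp add: field_simps)
      also have "(rr s)^2 / (C.Pm lam * c) \<le> 6/5" unfolding Pm_eq s_def c_def by (rule N2[OF lam1])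
      finally show ?thesis by simp
    qed
    have rec2: "(\<Sum>x\<in>S. p x * exp (\<theta> * - f0 x)) - (\<Sum>x\<in>S. p x * exp (\<theta> / 2 * - f0 x))^2
        \<le> b2 * \<theta>^2 * (\<Sum>x\<in>S. p x * exp (\<theta> * - f0 x))" if th: "0 < \<theta>" "\<theta> \<le> \<theta>0" for \<theta>
    proof -
      have hu: "\<theta> * sqrt \<nu> / 2 \<le> u0" unfolding hu0[symmetric] using th nu by (intro divide_right_mono mult_right_mono) auto
      have "C.Pm lam * ((\<Sum>x\<in>S. p x * exp (\<theta> * - f0 x)) - (\<Sum>x\<in>S. p x * exp (\<theta> / 2 * - f0 x))^2)
          \<le> \<theta>^2 * \<nu> * r0^2 / 4 * (\<Sum>x\<in>S. p x * exp (\<theta> * - f0 x))"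
        unfolding S_def p_def r0_def using nu
        by (intro C.mom_lower[OF TD lam1 k1 kd lip0 th(1) _ u01 hu]) auto
      then show ?thesis unfolding b2_def using Pmpos by (simp add: field_simps)
    qed
    have low: "(\<Sum>x\<in>{x\<in>S. - f0 x \<ge> t}. p x) \<le> 2 * exp (- (\<theta>0 * t))"
      by (rule tail_generic[OF finS pnn psum mean0' th0 b2 ab2 rec2])
    have P1: "prob_k X d w k (\<lambda>s. f s - expect_k X d w k f \<ge> t) = (\<Sum>x\<in>{x\<in>S. f0 x \<ge> t}. p x)"
      unfolding prob_k_def S_def p_def f0_def E_def by simp
    have P2: "prob_k X d w k (\<lambda>s. f s - expect_k X d w k f \<le> - t) = (\<Sum>x\<in>{x\<in>S. - f0 x \<ge> t}. p x)"
    proof -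
      have "{s \<in> faces X k. f s - expect_k X d w k f \<le> - t} = {x\<in>S. - f0 x \<ge> t}"
        unfolding S_def f0_def E_def by auto
      then show ?thesis unfolding prob_k_def p_def by simp
    qed
    show ?thesis unfolding key P1 P2 using up low by simp
  qed
qed


end
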